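(* Let $(\mathcal{F}_\alpha)_{\alpha<\omega_1}$ be a transfinite family. Let $1\le\alpha<\omega_1$, let $(\alpha_n)$ be a strictly increasing sequence of countable ordinals with $\alpha_1\ge1$, let $(\Theta_n)\subset(0,1]$ be non-increasing, and let $(\ell_n)\subset\mathbb{N}$ be non-decreasing with $\ell_1=1$ and $\ell_n\to\infty$. Let $S(\mathcal{F}_\alpha)$, $S((\Theta_n),(\mathcal{F}_{\alpha_n}))$ and $S((\Theta_n),(\mathcal{F}_{\alpha_n}),(\ell_n))$ be the completions of $c_{00}$ under the norms $\|x\|=\sup_{E\in\mathcal{F}_\alpha}\sum_{i\in E}|x_i|$, $\ \|x\|=\sup_n\Theta_n\sup_{E\in\mathcal{F}_{\alpha_n}}\sum_{i\in E}|x_i|$, $\ \|x\|=\sup_n\Theta_n\sup_{E\in\mathcal{F}_{\alpha_n},\ \ell_n\le\min E}\sum_{i\in E}|x_i|$ respectively. Then $S(\mathcal{F}_\alpha)$ and $S((\Theta_n),(\mathcal{F}_{\alpha_n}),(\ell_n))$ are hereditarily $c_0$, and if moreover $\Theta_n\to0$ then $S((\Theta_n),(\mathcal{F}_{\alpha_n}))$ is hereditarily $c_0$.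
   Context: $c_{00}$ = finitely supported real sequences $x=(x_i)$. A Banach space is hereditarily $c_0$ if every infinite-dimensional closed subspace contains a subspace isomorphic to $c_0$. Transfinite family: given, for each countable limit ordinal $\alpha$, finite sets $A_n(\alpha)\subset[0,\alpha)$ increasing in $n$ with $\max A_n(\alpha)\to\alpha$, set $\mathcal{F}_0=\{\emptyset\}$, $\mathcal{F}_{\beta+1}=\{\{n\}\cup E:n\in\mathbb{N},E\in\mathcal{F}_\beta\}\cup\{\emptyset\}$, and for limit $\alpha$, $\mathcal{F}_\alpha=\{\emptyset\}\cup\{E\ne\emptyset:E\in\bigcup_{\beta\in A_{\min E}(\alpha)}\mathcal{F}_\beta\}$. *)

theory Defs
  imports Complex_Main "HOL-Library.Extended_Real" "HOL-Library.Countable_Set"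
begin

definition ord_least :: "'o::wellorder \<Rightarrow> bool" where
  "ord_least \<alpha> \<longleftrightarrow> (\<forall>\<beta>. \<alpha> \<le> \<beta>)"

definition ord_succ_of :: "'o::wellorder \<Rightarrow> 'o \<Rightarrow> bool" where
  "ord_succ_of \<alpha> \<beta> \<longleftrightarrow> \<beta> < \<alpha> \<and> \<not> (\<exists>\<gamma>. \<beta> < \<gamma> \<and> \<gamma> < \<alpha>)"

definition ord_limit :: "'o::wellorder \<Rightarrow> bool" where
  "ord_limit \<alpha> \<longleftrightarrow> \<not> ord_least \<alpha> \<and> \<not> (\<exists>\<beta>. ord_succ_of \<alpha> \<beta>)"

definition transfinite_family ::
  "(nat \<Rightarrow> 'o::wellorder \<Rightarrow> 'o set) \<Rightarrow> ('o \<Rightarrow> nat set set) \<Rightarrow> bool" where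
  "transfinite_family A F \<longleftrightarrow>
     (\<forall>\<alpha>. ord_limit \<alpha> \<longrightarrow>
        (\<forall>n. finite (A n \<alpha>) \<and> A n \<alpha> \<subseteq> {..<\<alpha>} \<and> A n \<alpha> \<subseteq> A (Suc n) \<alpha>) \<and>
        (\<forall>\<beta><\<alpha>. \<exists>n. \<exists>\<gamma>\<in>A n \<alpha>. \<beta> \<le> \<gamma>)) \<and>
     (\<forall>\<alpha>. ord_least \<alpha> \<longrightarrow> F \<alpha> = {{}}) \<and>
     (\<forall>\<alpha> \<beta>. ord_succ_of \<alpha> \<beta> \<longrightarrow>
        F \<alpha> = {insert n E | n E. E \<in> F \<beta>} \<union> {{}}) \<and>
     (\<forall>\<alpha>. ord_limit \<alpha> \<longrightarrow>
        F \<alpha> = {{}} \<union> {E. E \<noteq> {} \<and> finite E \<and> (\<exists>\<beta>\<in>A (Min E) \<alpha>. E \<in> F \<beta>)})"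

definition schreier_norm :: "('o \<Rightarrow> nat set set) \<Rightarrow> 'o \<Rightarrow> (nat \<Rightarrow> real) \<Rightarrow> ereal" where
  "schreier_norm F \<alpha> x = (SUP E\<in>F \<alpha>. ereal (\<Sum>i\<in>E. \<bar>x i\<bar>))"

definition mixed_norm ::
  "('o \<Rightarrow> nat set set) \<Rightarrow> (nat \<Rightarrow> real) \<Rightarrow> (nat \<Rightarrow> 'o) \<Rightarrow> (nat \<Rightarrow> real) \<Rightarrow> ereal" where
  "mixed_norm F \<Theta> \<alpha>s x = (SUP n. ereal (\<Theta> n) * (SUP E\<in>F (\<alpha>s n). ereal (\<Sum>i\<in>E. \<bar>x i\<bar>)))"

definition mixed_norm_l ::
  "('o \<Rightarrow> nat set set) \<Rightarrow> (nat \<Rightarrow> real) \<Rightarrow> (nat \<Rightarrow> 'o) \<Rightarrow> (nat \<Rightarrow> nat) \<Rightarrow> (nat \<Rightarrow> real) \<Rightarrow> ereal" where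
  "mixed_norm_l F \<Theta> \<alpha>s l x =
     (SUP n. ereal (\<Theta> n) * (SUP E\<in>{E\<in>F (\<alpha>s n). \<forall>i\<in>E. l n \<le> i}. ereal (\<Sum>i\<in>E. \<bar>x i\<bar>)))"

definition c00 :: "(nat \<Rightarrow> real) set" where
  "c00 = {x. finite {i. x i \<noteq> 0}}"

text \<open>Completion of c00 under N, realised as the N-closure of c00 among sequences of finite N-norm.\<close>
definition completion_c00 :: "((nat \<Rightarrow> real) \<Rightarrow> ereal) \<Rightarrow> (nat \<Rightarrow> real) set" where
  "completion_c00 N = {x. N x < \<infinity> \<and> (\<forall>e>0. \<exists>y\<in>c00. N (\<lambda>i. x i - y i) < ereal e)}"

definition lin_subspace :: "(nat \<Rightarrow> real) set \<Rightarrow> bool" where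
  "lin_subspace Y \<longleftrightarrow> (\<lambda>_. 0) \<in> Y \<and> (\<forall>x\<in>Y. \<forall>y\<in>Y. (\<lambda>i. x i + y i) \<in> Y) \<and>
     (\<forall>c. \<forall>x\<in>Y. (\<lambda>i. c * x i) \<in> Y)"

definition N_closed_in :: "((nat \<Rightarrow> real) \<Rightarrow> ereal) \<Rightarrow> (nat \<Rightarrow> real) set \<Rightarrow> (nat \<Rightarrow> real) set \<Rightarrow> bool" where
  "N_closed_in N X Y \<longleftrightarrow> (\<forall>x\<in>X. (\<forall>e>0. \<exists>y\<in>Y. N (\<lambda>i. x i - y i) < ereal e) \<longrightarrow> x \<in> Y)"

definition fin_dim :: "(nat \<Rightarrow> real) set \<Rightarrow> bool" where
  "fin_dim Y \<longleftrightarrow> (\<exists>B. finite B \<and> Y \<subseteq> {(\<lambda>i. \<Sum>b\<in>B. c b * b i) | c. True})"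

definition c0_seq :: "(nat \<Rightarrow> real) set" where
  "c0_seq = {x. x \<longlonglongrightarrow> 0}"

definition sup_norm :: "(nat \<Rightarrow> real) \<Rightarrow> real" where
  "sup_norm x = (SUP i. \<bar>x i\<bar>)"

definition lin_on :: "(nat \<Rightarrow> real) set \<Rightarrow> ((nat \<Rightarrow> real) \<Rightarrow> (nat \<Rightarrow> real)) \<Rightarrow> bool" where
  "lin_on V T \<longleftrightarrow> (\<forall>x\<in>V. \<forall>y\<in>V. \<forall>a b.
      T (\<lambda>i. a * x i + b * y i) = (\<lambda>i. a * T x i + b * T y i))"

definition contains_c0 :: "((nat \<Rightarrow> real) \<Rightarrow> ereal) \<Rightarrow> (nat \<Rightarrow> real) set \<Rightarrow> bool" where
  "contains_c0 N Y \<longleftrightarrow> (\<exists>T. (\<forall>x\<in>c0_seq. T x \<in> Y) \<and> lin_on c0_seq T \<and>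
     (\<exists>a>0. \<exists>b>0. \<forall>x\<in>c0_seq. ereal (a * sup_norm x) \<le> N (T x) \<and> N (T x) \<le> ereal (b * sup_norm x)))"

definition hereditarily_c0 :: "((nat \<Rightarrow> real) \<Rightarrow> ereal) \<Rightarrow> bool" where
  "hereditarily_c0 N \<longleftrightarrow> (\<forall>Y. Y \<subseteq> completion_c00 N \<and> lin_subspace Y \<and>
      N_closed_in N (completion_c00 N) Y \<and> \<not> fin_dim Y \<longrightarrow> contains_c0 N Y)"

end

theory Submission
  imports Defs
begin


definition val :: "real \<times> nat set \<Rightarrow> (nat \<Rightarrow> real) \<Rightarrow> real" where
  "val g y = fst g * (\<Sum>i\<in>snd g. \<bar>y i\<bar>)"

definition vanish :: "nat \<Rightarrow> (nat \<Rightarrow> real) \<Rightarrow> bool" where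
  "vanish M y \<longleftrightarrow> (\<forall>i<M. y i = 0)"

definition tailv :: "nat \<Rightarrow> (nat \<Rightarrow> real) \<Rightarrow> nat \<Rightarrow> real" where
  "tailv M y = (\<lambda>i. if i < M then 0 else y i)"

definition tailnull :: "(real \<times> nat set) set \<Rightarrow> (nat \<Rightarrow> real) \<Rightarrow> bool" where
  "tailnull G y \<longleftrightarrow> (\<exists>R. \<forall>g\<in>G. val g y \<le> R) \<and> (\<forall>e>0. \<exists>M. \<forall>g\<in>G. val g (tailv M y) \<le> e)"

definition comb :: "nat \<Rightarrow> (nat \<Rightarrow> real) \<Rightarrow> (nat \<Rightarrow> nat \<Rightarrow> real) \<Rightarrow> nat \<Rightarrow> real" where
  "comb n c ys = (\<lambda>i. \<Sum>k<n. c k * ys k i)"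

definition c0seq :: "(real \<times> nat set) set \<Rightarrow> (nat \<Rightarrow> real) set \<Rightarrow> bool" where
  "c0seq G Y \<longleftrightarrow> (\<exists>ys a b. 0<a \<and> 0<b \<and> (\<forall>k. ys k \<in> Y \<and> vanish k (ys k)) \<and>
     (\<forall>n c m. 0 \<le> m \<longrightarrow> (\<forall>k<n. \<bar>c k\<bar> \<le> m) \<longrightarrow> (\<forall>g\<in>G. val g (comb n c ys) \<le> b*m)) \<and>
     (\<forall>n c k. k<n \<longrightarrow> (\<forall>j<n. \<bar>c j\<bar> \<le> \<bar>c k\<bar>) \<longrightarrow> (\<exists>g\<in>G. a*\<bar>c k\<bar> \<le> val g (comb n c ys))))"

definition QQ :: "(real \<times> nat set) set \<Rightarrow> bool" where
  "QQ G \<longleftrightarrow> (\<forall>Y. lin_subspace Y \<and> (\<forall>y\<in>Y. tailnull G y) \<and>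
      (\<forall>M. \<exists>y\<in>Y. vanish M y \<and> (\<exists>g\<in>G. 0 < val g y)) \<longrightarrow> c0seq G Y)"

definition wfG :: "(real \<times> nat set) set \<Rightarrow> bool" where
  "wfG G \<longleftrightarrow> (\<forall>g\<in>G. 0 \<le> fst g \<and> finite (snd g))"

lemma val_nonneg: "0 \<le> fst g \<Longrightarrow> 0 \<le> val g y"
  unfolding val_def by (simp add: sum_nonneg)

lemma val_mono: "0 \<le> fst g \<Longrightarrow> (\<And>i. i \<in> snd g \<Longrightarrow> \<bar>x i\<bar> \<le> \<bar>y i\<bar>) \<Longrightarrow> val g x \<le> val g y"
  unfolding val_def by (intro mult_left_mono sum_mono) auto

lemma val_add: "0 \<le> fst g \<Longrightarrow> val g (\<lambda>i. x i + y i) \<le> val g x + val g y"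
proof -
  assume a: "0 \<le> fst g"
  have "(\<Sum>i\<in>snd g. \<bar>x i + y i\<bar>) \<le> (\<Sum>i\<in>snd g. \<bar>x i\<bar> + \<bar>y i\<bar>)"
    by (intro sum_mono) (rule abs_triangle_ineq)
  then show ?thesis unfolding val_def using a
    by (simp add: sum.distrib distrib_left[symmetric] mult_left_mono)
qed

lemma val_scale: "val g (\<lambda>i. c * x i) = \<bar>c\<bar> * val g x"
  unfolding val_def by (simp add: abs_mult sum_distrib_left[symmetric] algebra_simps)

lemma val_minus_sym: "val g (\<lambda>i. x i - y i) = val g (\<lambda>i. y i - x i)"
  unfolding val_def by (simp add: abs_minus_commute)

lemma val_neg: "val g (\<lambda>i. - y i) = val g y"
  unfolding val_def by simp

lemma val_sub: "0 \<le> fst g \<Longrightarrow> val g (\<lambda>i. x i - y i) \<le> val g x + val g y"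
proof -
  assume a: "0 \<le> fst g"
  have "val g (\<lambda>i. x i + (-1) * y i) \<le> val g x + val g (\<lambda>i. (-1) * y i)"
    using val_add[OF a] .
  then show ?thesis by (simp add: val_scale val_neg)
qed

lemma val_sum: fixes f :: "nat \<Rightarrow> nat \<Rightarrow> real" and n :: nat shows "0 \<le> fst g \<Longrightarrow> val g (\<lambda>i. \<Sum>j<n. f j i) \<le> (\<Sum>j<n. val g (f j))"
proof (induction n)
  case 0 then show ?case by (simp add: val_def)
next
  case (Suc n)
  have "val g (\<lambda>i. \<Sum>j<Suc n. f j i) = val g (\<lambda>i. (\<Sum>j<n. f j i) + f n i)" by simp
  also have "\<dots> \<le> val g (\<lambda>i. \<Sum>j<n. f j i) + val g (f n)"
    using val_add[OF Suc.prems, of "\<lambda>i. \<Sum>j<n. f j i" "f n"] by simp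
  also have "\<dots> \<le> (\<Sum>j<Suc n. val g (f j))" using Suc by simp
  finally show ?case .
qed

lemma val_comb: "0 \<le> fst g \<Longrightarrow> val g (comb n c ys) \<le> (\<Sum>j<n. \<bar>c j\<bar> * val g (ys j))"
proof -
  assume a: "0 \<le> fst g"
  have "val g (comb n c ys) \<le> (\<Sum>j<n. val g (\<lambda>i. c j * ys j i))"
    unfolding comb_def using val_sum[OF a, where n=n and f="\<lambda>j i. c j * ys j i"] by simp
  then show ?thesis by (simp add: val_scale)
qed

lemma geo: "(\<Sum>j<n. (1/2::real)^j) = 2 - 2*(1/2)^n"
  by (induction n) (auto simp: field_simps)

lemma geo_le: "(\<Sum>j<n. (1/2::real)^j) \<le> 2"
  using geo[of n] by simp

lemma lin_add: "lin_subspace Y \<Longrightarrow> x \<in> Y \<Longrightarrow> y \<in> Y \<Longrightarrow> (\<lambda>i. x i + y i) \<in> Y"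
  unfolding lin_subspace_def by blast
lemma lin_scale: "lin_subspace Y \<Longrightarrow> x \<in> Y \<Longrightarrow> (\<lambda>i. c * x i) \<in> Y"
  unfolding lin_subspace_def by blast
lemma lin_zero: "lin_subspace Y \<Longrightarrow> (\<lambda>_. 0) \<in> Y"
  unfolding lin_subspace_def by blast

lemma comb_in: "lin_subspace Y \<Longrightarrow> (\<And>k. ys k \<in> Y) \<Longrightarrow> comb n c ys \<in> Y"
proof (induction n)
  case 0 then show ?case by (simp add: comb_def lin_zero)
next
  case (Suc n)
  have "comb (Suc n) c ys = (\<lambda>i. comb n c ys i + c n * ys n i)" by (simp add: comb_def)
  then show ?case using Suc lin_add lin_scale by metis
qed

lemma tailv_val_mono: "0 \<le> fst g \<Longrightarrow> M \<le> M' \<Longrightarrow> val g (tailv M' y) \<le> val g (tailv M y)"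
  by (rule val_mono) (auto simp: tailv_def)


lemma normalize:
  assumes lin: "lin_subspace Y" and yY: "y \<in> Y" and tn: "tailnull G y" and wf: "wfG G"
    and z: "(1,{}) \<in> G'" and r: "\<forall>g\<in>G'. val g y \<le> r" and gG: "g \<in> G"
    and big: "(2/\<delta>)*r < val g y" and dpos: "0 < \<delta>"
  shows "\<exists>y'\<in>Y. (vanish M y \<longrightarrow> vanish M y') \<and> (\<forall>g\<in>G. val g y' \<le> 1) \<and>
     (\<exists>g\<in>G. 1/2 < val g y') \<and> (\<forall>g\<in>G'. val g y' \<le> \<delta>)"
proof -
  obtain R where R: "\<forall>g\<in>G. val g y \<le> R" using tn unfolding tailnull_def by blast
  define S where "S = (\<lambda>g. val g y) ` G"
  have bdd: "bdd_above S" unfolding S_def bdd_above_def using R by blast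
  have ne: "S \<noteq> {}" using gG S_def by blast
  define s where "s = Sup S"
  have gs: "val g y \<le> s" unfolding s_def using bdd gG S_def by (auto intro: cSup_upper)
  have r0: "0 \<le> r" using r z by (auto simp: val_def)
  have "0 \<le> (2/\<delta>)*r" using r0 dpos by simp
  hence spos: "0 < s" using big gs by linarith
  define y' where "y' = (\<lambda>i. (1/s) * y i)"
  have vy': "\<And>g. val g y' = val g y / s" unfolding y'_def val_scale using spos by simp
  have "y' \<in> Y" unfolding y'_def using lin yY by (rule lin_scale)
  moreover have "vanish M y \<longrightarrow> vanish M y'" unfolding vanish_def y'_def by simp
  moreover have "\<forall>g\<in>G. val g y' \<le> 1"
  proof
    fix h assume "h \<in> G"
    hence "val h y \<le> s" unfolding s_def using bdd S_def by (auto intro: cSup_upper)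
    thus "val h y' \<le> 1" using vy' spos by simp
  qed
  moreover have "\<exists>g\<in>G. 1/2 < val g y'"
  proof -
    have "s/2 < Sup S" using spos s_def by simp
    then obtain v where "v \<in> S" "s/2 < v" using less_cSup_iff[OF ne bdd] by blast
    then obtain h where "h \<in> G" "s/2 < val h y" using S_def by blast
    have e: "val h y = s * val h y'" using vy' spos by simp
    have "s * 1 < s * (2 * val h y')" using \<open>s/2 < val h y\<close> e by simp
    hence "1/2 < val h y'" using spos mult_less_cancel_left_pos by fastforce
    thus ?thesis using \<open>h \<in> G\<close> by blast
  qed
  moreover have "\<forall>g\<in>G'. val g y' \<le> \<delta>"
  proof
    fix h assume "h \<in> G'"
    hence hr: "val h y \<le> r" using r by blast
    have "\<delta> * val g y \<le> \<delta> * s" using gs dpos by simp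
    moreover have "r*2 < \<delta> * val g y" using big dpos by (simp add: field_simps)
    ultimately have "r < \<delta> * s / 2" by linarith
    with hr have "val h y \<le> \<delta> * s" using mult_pos_pos[OF dpos spos] by linarith
    hence "val h y / s \<le> \<delta>" using spos by (simp add: pos_divide_le_eq mult.commute)
    thus "val h y' \<le> \<delta>" using vy' by simp
  qed
  ultimately show ?thesis by blast
qed

lemma engine:
  fixes G :: "(real \<times> nat set) set" and G' :: "nat \<Rightarrow> nat \<Rightarrow> (real \<times> nat set) set"
  assumes lin: "lin_subspace Y" and tn: "\<forall>y\<in>Y. tailnull G y" and wf: "wfG G"
    and z: "\<forall>k M. (1,{}) \<in> G' k M"
    and notA: "\<forall>k M C. C>0 \<longrightarrow> (\<exists>y\<in>Y. vanish M y \<and> (\<exists>r. (\<forall>g\<in>G' k M. val g y \<le> r) \<and> (\<exists>g\<in>G. C*r < val g y)))"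
  shows "\<exists>ys Mp. Mp 0 = M00 \<and> strict_mono Mp \<and> (\<forall>k. ys k \<in> Y \<and> vanish (Mp k) (ys k) \<and>
     (\<forall>g\<in>G. val g (ys k) \<le> 1) \<and> (\<exists>g\<in>G. 1/2 < val g (ys k)) \<and>
     (\<forall>g\<in>G' k (Mp k). val g (ys k) \<le> (1/2)^k) \<and>
     (\<forall>g\<in>G. val g (tailv (Mp (Suc k)) (ys k)) \<le> (1/2)^(k+3)))"
proof -
  define P where "P = (\<lambda>k M (p :: (nat \<Rightarrow> real) \<times> nat). fst p \<in> Y \<and> vanish M (fst p) \<and>
     (\<forall>g\<in>G. val g (fst p) \<le> 1) \<and> (\<exists>g\<in>G. 1/2 < val g (fst p)) \<and>
     (\<forall>g\<in>G' k M. val g (fst p) \<le> (1/2)^k) \<and> M < snd p \<and>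
     (\<forall>g\<in>G. val g (tailv (snd p) (fst p)) \<le> (1/2)^(k+3)))"
  have step: "\<forall>k M. \<exists>p. P k M p"
  proof (intro allI)
    fix k M
    have dpos: "(0::real) < (1/2)^k" by simp
    have "2/(1/2)^k > (0::real)" by simp
    then obtain y r g where y: "y \<in> Y" "vanish M y" "\<forall>g\<in>G' k M. val g y \<le> r" "g \<in> G"
      "(2/(1/2)^k)*r < val g y" using notA by blast
    obtain y' where y': "y' \<in> Y" "vanish M y'" "\<forall>g\<in>G. val g y' \<le> 1" "\<exists>g\<in>G. 1/2 < val g y'"
      "\<forall>g\<in>G' k M. val g y' \<le> (1/2)^k"
      using normalize[OF lin y(1) _ wf _ y(3) y(4) y(5) dpos, of M] tn z y(1,2) by blast
    have "(0::real) < (1/2)^(k+3)" by simp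
    then obtain M1 where M1: "\<forall>g\<in>G. val g (tailv M1 y') \<le> (1/2)^(k+3)"
      using tn y'(1) unfolding tailnull_def by blast
    define M' where "M' = max M1 (Suc M)"
    have "\<forall>g\<in>G. val g (tailv M' y') \<le> (1/2)^(k+3)"
    proof
      fix g assume g: "g \<in> G"
      hence "0 \<le> fst g" using wf wfG_def by blast
      hence "val g (tailv M' y') \<le> val g (tailv M1 y')" by (rule tailv_val_mono) (simp add: M'_def)
      thus "val g (tailv M' y') \<le> (1/2)^(k+3)" using M1 g by fastforce
    qed
    hence "P k M (y', M')" unfolding P_def using y' by (simp add: M'_def)
    thus "\<exists>p. P k M p" by blast
  qed
  obtain sf where sf: "\<And>k M. P k M (sf k M)" using step by metis
  define Mp where "Mp = rec_nat M00 (\<lambda>k M. snd (sf k M))"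
  have Mp0: "Mp 0 = M00" unfolding Mp_def by simp
  have MpS: "\<And>k. Mp (Suc k) = snd (sf k (Mp k))" unfolding Mp_def by simp
  define ys where "ys = (\<lambda>k. fst (sf k (Mp k)))"
  have "\<And>k. Mp k < Mp (Suc k)" using sf MpS unfolding P_def by metis
  hence sm: "strict_mono Mp" by (simp add: strict_mono_Suc_iff)
  have "\<forall>k. ys k \<in> Y \<and> vanish (Mp k) (ys k) \<and>
     (\<forall>g\<in>G. val g (ys k) \<le> 1) \<and> (\<exists>g\<in>G. 1/2 < val g (ys k)) \<and>
     (\<forall>g\<in>G' k (Mp k). val g (ys k) \<le> (1/2)^k) \<and>
     (\<forall>g\<in>G. val g (tailv (Mp (Suc k)) (ys k)) \<le> (1/2)^(k+3))"
  proof
    fix k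
    show "ys k \<in> Y \<and> vanish (Mp k) (ys k) \<and>
     (\<forall>g\<in>G. val g (ys k) \<le> 1) \<and> (\<exists>g\<in>G. 1/2 < val g (ys k)) \<and>
     (\<forall>g\<in>G' k (Mp k). val g (ys k) \<le> (1/2)^k) \<and>
     (\<forall>g\<in>G. val g (tailv (Mp (Suc k)) (ys k)) \<le> (1/2)^(k+3))"
      using sf[of k "Mp k"] unfolding P_def ys_def MpS by simp
  qed
  thus ?thesis using Mp0 sm by blast
qed


lemma geo3: "(\<Sum>j<n. (1/2::real)^(j+3)) \<le> 1/4"
proof -
  have e: "\<And>j. (1/2::real)^(j+3) = (1/8)*(1/2)^j" by (simp add: power_add power3_eq_cube)
  have "(\<Sum>j<n. (1/2::real)^(j+3)) = (1/8) * (\<Sum>j<n. (1/2)^j)"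
    unfolding e by (simp only: sum_distrib_left)
  also have "\<dots> \<le> (1/8) * 2" using geo_le[of n] by simp
  finally show ?thesis by simp
qed

lemma finish:
  assumes wf: "wfG G" and ys: "\<forall>k. ys k \<in> Y" and sm: "strict_mono Mp"
    and van: "\<forall>k. vanish (Mp k) (ys k)" and le1: "\<forall>k. \<forall>g\<in>G. val g (ys k) \<le> 1"
    and big: "\<forall>k. \<exists>g\<in>G. 1/2 < val g (ys k)"
    and tl: "\<forall>k. \<forall>g\<in>G. val g (tailv (Mp (Suc k)) (ys k)) \<le> (1/2)^(k+3)"
    and up: "\<forall>g\<in>G. \<forall>n. (\<Sum>j<n. val g (ys j)) \<le> Cu" and Cu: "0 < Cu"
  shows "c0seq G Y"
proof -
  have f0: "\<And>g. g \<in> G \<Longrightarrow> 0 \<le> fst g" using wf wfG_def by blast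
  have vk: "\<forall>k. ys k \<in> Y \<and> vanish k (ys k)"
  proof
    fix k
    have "k \<le> Mp k" using sm by (rule strict_mono_imp_increasing)
    thus "ys k \<in> Y \<and> vanish k (ys k)" using ys van unfolding vanish_def by auto
  qed
  have upper: "\<forall>(n::nat) (c::nat\<Rightarrow>real) (m::real). 0 \<le> m \<longrightarrow> (\<forall>k<n. \<bar>c k\<bar> \<le> m) \<longrightarrow> (\<forall>g\<in>G. val g (comb n c ys) \<le> Cu*m)"
  proof (intro allI impI ballI)
    fix n :: nat and c :: "nat \<Rightarrow> real" and m :: real and g assume m: "0 \<le> m" "\<forall>k<n. \<bar>c k\<bar> \<le> m" and g: "g \<in> G"
    have "val g (comb n c ys) \<le> (\<Sum>j<n. \<bar>c j\<bar> * val g (ys j))" using val_comb f0[OF g] by blast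
    also have "\<dots> \<le> (\<Sum>j<n. m * val g (ys j))"
      using m val_nonneg[OF f0[OF g]] by (intro sum_mono mult_right_mono) auto
    also have "\<dots> = m * (\<Sum>j<n. val g (ys j))" by (simp add: sum_distrib_left)
    also have "\<dots> \<le> m * Cu" using up g m by (intro mult_left_mono) auto
    finally show "val g (comb n c ys) \<le> Cu*m" by (simp add: mult.commute)
  qed
  have lower: "\<forall>(n::nat) (c::nat\<Rightarrow>real) (k::nat). k<n \<longrightarrow> (\<forall>j<n. \<bar>c j\<bar> \<le> \<bar>c k\<bar>) \<longrightarrow> (\<exists>g\<in>G. (1/4)*\<bar>c k\<bar> \<le> val g (comb n c ys))"
  proof (intro allI impI)
    fix n :: nat and c :: "nat \<Rightarrow> real" and k :: nat assume kn: "k < n" and mx: "\<forall>j<n. \<bar>c j\<bar> \<le> \<bar>c k\<bar>"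
    obtain g where g: "g \<in> G" "1/2 < val g (ys k)" using big by blast
    have fg: "0 \<le> fst g" using f0 g by blast
    define W where "W = (\<lambda>i. if Mp k \<le> i \<and> i < Mp (Suc k) then comb n c ys i else 0)"
    define u where "u = (\<lambda>i. if i < Mp (Suc k) then ys k i else 0)"
    define w where "w = (\<lambda>j i. if Mp k \<le> i \<and> i < Mp (Suc k) then ys j i else 0)"
    have decomp: "\<And>i. c k * u i = W i - comb k c w i"
    proof -
      fix i
      show "c k * u i = W i - comb k c w i"
      proof (cases "Mp k \<le> i \<and> i < Mp (Suc k)")
        case True
        have z: "\<And>j. Suc k \<le> j \<Longrightarrow> ys j i = 0"
        proof -
          fix j assume "Suc k \<le> j"
          hence "Mp (Suc k) \<le> Mp j" using sm by (simp add: strict_mono_less_eq)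
          thus "ys j i = 0" using van True unfolding vanish_def by auto
        qed
        have "comb n c ys i = (\<Sum>j<Suc k. c j * ys j i)"
          unfolding comb_def using kn z by (intro sum.mono_neutral_right) auto
        also have "\<dots> = comb k c w i + c k * ys k i"
          unfolding comb_def w_def using True by simp
        finally show ?thesis unfolding W_def u_def using True by simp
      next
        case False
        have "u i = 0" unfolding u_def using False van unfolding vanish_def by auto
        moreover have "comb k c w i = 0" unfolding comb_def w_def using False by (intro sum.neutral) auto
        ultimately show ?thesis unfolding W_def using False by auto
      qed
    qed
    define A where "A = \<bar>c k\<bar>"
    define T where "T = (\<Sum>j<k. (1/2::real)^(j+3))"
    define e where "e = (1/2::real)^(k+3)"
    have eT: "e + T \<le> 1/4" using geo3[of "Suc k"] unfolding e_def T_def by simp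
    have A0: "0 \<le> A" unfolding A_def by simp
    have "A * val g u = val g (\<lambda>i. c k * u i)" unfolding A_def by (simp add: val_scale)
    also have "\<dots> = val g (\<lambda>i. W i - comb k c w i)" using decomp by simp
    also have "\<dots> \<le> val g W + val g (comb k c w)" using val_sub[OF fg] by blast
    finally have s1: "A * val g u \<le> val g W + val g (comb k c w)" .
    have "val g (comb k c w) \<le> (\<Sum>j<k. \<bar>c j\<bar> * val g (w j))" using val_comb[OF fg] by blast
    also have "\<dots> \<le> (\<Sum>j<k. A * (1/2)^(j+3))"
    proof (intro sum_mono)
      fix j assume j: "j \<in> {..<k}"
      have "val g (w j) \<le> val g (tailv (Mp (Suc j)) (ys j))"
      proof (rule val_mono[OF fg])
        fix i
        have "Mp (Suc j) \<le> Mp k" using j sm by (simp add: strict_mono_less_eq)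
        thus "\<bar>w j i\<bar> \<le> \<bar>tailv (Mp (Suc j)) (ys j) i\<bar>" unfolding w_def tailv_def by auto
      qed
      also have "\<dots> \<le> (1/2)^(j+3)" using tl g by blast
      finally have "val g (w j) \<le> (1/2)^(j+3)" .
      moreover have "\<bar>c j\<bar> \<le> A" using mx j kn unfolding A_def by auto
      ultimately show "\<bar>c j\<bar> * val g (w j) \<le> A * (1/2)^(j+3)"
        using A0 val_nonneg[OF fg] by (intro mult_mono) auto
    qed
    also have "\<dots> = A * T" unfolding T_def by (simp add: sum_distrib_left)
    finally have s2: "val g (comb k c w) \<le> A * T" .
    have "val g (ys k) = val g (\<lambda>i. u i + tailv (Mp (Suc k)) (ys k) i)"
      unfolding u_def tailv_def by (rule arg_cong[where f="val g"]) auto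
    also have "\<dots> \<le> val g u + val g (tailv (Mp (Suc k)) (ys k))" using val_add[OF fg] by blast
    finally have "val g (ys k) \<le> val g u + e"
      using tl g(1) unfolding e_def by (meson add_left_mono order_trans)
    hence s3: "1/2 - e \<le> val g u" using g by linarith
    have "A * (1/2 - e) \<le> A * val g u" using s3 A0 by (rule mult_left_mono)
    hence s4: "A * (1/2 - e) - A * T \<le> val g W" using s1 s2 by linarith
    have "A * (1/4) \<le> A * (1/2 - e - T)" using eT A0 by (intro mult_left_mono) auto
    hence "A * (1/4) \<le> val g W" using s4 by (simp add: algebra_simps)
    moreover have "val g W \<le> val g (comb n c ys)" unfolding W_def by (rule val_mono[OF fg]) auto
    ultimately have "(1/4)*\<bar>c k\<bar> \<le> val g (comb n c ys)" using A_def by (simp add: mult.commute)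
    thus "\<exists>g\<in>G. (1/4)*\<bar>c k\<bar> \<le> val g (comb n c ys)" using g(1) by blast
  qed
  show ?thesis unfolding c0seq_def
    apply (rule exI[of _ ys], rule exI[of _ "1/4"], rule exI[of _ Cu])
    using vk upper lower Cu by simp
qed


lemma transferA:
  assumes Q: "QQ G'" and lin: "lin_subspace Y" and tn: "\<forall>y\<in>Y. tailnull G y"
    and pos: "\<forall>M. \<exists>y\<in>Y. vanish M y \<and> (\<exists>g\<in>G. 0 < val g y)" and wf: "wfG G"
    and C1: "0 < C1" and d1: "\<forall>y\<in>Y. vanish M0 y \<longrightarrow> (\<forall>r. (\<forall>g'\<in>G'. val g' y \<le> r) \<longrightarrow> (\<forall>g\<in>G. val g y \<le> C1*r))"
    and C2: "0 < C2" and d2: "\<forall>y. vanish M0 y \<longrightarrow> (\<forall>r. (\<forall>g\<in>G. val g y \<le> r) \<longrightarrow> (\<forall>g'\<in>G'. val g' y \<le> C2*r))"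
  shows "c0seq G Y"
proof -
  define Y' where "Y' = {y\<in>Y. vanish M0 y}"
  have lin': "lin_subspace Y'"
    using lin unfolding lin_subspace_def Y'_def vanish_def by auto
  have tn': "\<forall>y\<in>Y'. tailnull G' y"
  proof
    fix y assume y: "y \<in> Y'"
    hence yY: "y \<in> Y" and vy: "vanish M0 y" unfolding Y'_def by auto
    obtain R where R: "\<forall>g\<in>G. val g y \<le> R" using tn yY unfolding tailnull_def by blast
    have b1: "\<forall>g'\<in>G'. val g' y \<le> C2*R" using d2 vy R by blast
    have b2: "\<forall>e>0. \<exists>M. \<forall>g'\<in>G'. val g' (tailv M y) \<le> e"
    proof (intro allI impI)
      fix e :: real assume e: "0 < e"
      hence "0 < e/C2" using C2 by simp
      then obtain M where M: "\<forall>g\<in>G. val g (tailv M y) \<le> e/C2" using tn yY unfolding tailnull_def by blast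
      have "vanish M0 (tailv M y)" using vy unfolding vanish_def tailv_def by auto
      hence "\<forall>g'\<in>G'. val g' (tailv M y) \<le> C2*(e/C2)" using d2 M by blast
      thus "\<exists>M. \<forall>g'\<in>G'. val g' (tailv M y) \<le> e" using C2 by auto
    qed
    show "tailnull G' y" unfolding tailnull_def using b1 b2 by blast
  qed
  have pos': "\<forall>M. \<exists>y\<in>Y'. vanish M y \<and> (\<exists>g\<in>G'. 0 < val g y)"
  proof
    fix M
    obtain y where y: "y \<in> Y" "vanish (max M M0) y" and g: "\<exists>g\<in>G. 0 < val g y" using pos by blast
    have v: "vanish M y" "vanish M0 y" using y(2) unfolding vanish_def by auto
    have "\<exists>g\<in>G'. 0 < val g y"
    proof (rule ccontr)
      assume "\<not> (\<exists>g\<in>G'. 0 < val g y)"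
      hence "\<forall>g'\<in>G'. val g' y \<le> 0" by auto
      hence "\<forall>g\<in>G. val g y \<le> C1*0" using d1 y(1) v(2) by blast
      thus False using g by auto
    qed
    thus "\<exists>y\<in>Y'. vanish M y \<and> (\<exists>g\<in>G'. 0 < val g y)" using y v unfolding Y'_def by blast
  qed
  obtain ys a b where ab: "0<a" "0<b" and ysk: "\<forall>k. ys k \<in> Y' \<and> vanish k (ys k)"
    and up: "\<forall>n c m. 0 \<le> m \<longrightarrow> (\<forall>k<n. \<bar>c k\<bar> \<le> m) \<longrightarrow> (\<forall>g\<in>G'. val g (comb n c ys) \<le> b*m)"
    and lo: "\<forall>n c k. k<n \<longrightarrow> (\<forall>j<n. \<bar>c j\<bar> \<le> \<bar>c k\<bar>) \<longrightarrow> (\<exists>g\<in>G'. a*\<bar>c k\<bar> \<le> val g (comb n c ys))"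
    using Q lin' tn' pos' unfolding QQ_def c0seq_def by blast
  have combY: "\<And>n c. comb n c ys \<in> Y'" using comb_in[OF lin'] ysk by blast
  have Gne: "G \<noteq> {}" using pos by blast
  have up2: "\<forall>(n::nat) c m. 0 \<le> m \<longrightarrow> (\<forall>k<n. \<bar>c k\<bar> \<le> m) \<longrightarrow> (\<forall>g\<in>G. val g (comb n c ys) \<le> (C1*b)*m)"
  proof (intro allI impI)
    fix n :: nat and c :: "nat \<Rightarrow> real" and m :: real
    assume "0 \<le> m" "\<forall>k<n. \<bar>c k\<bar> \<le> m"
    hence "\<forall>g\<in>G'. val g (comb n c ys) \<le> b*m" using up by blast
    moreover have "comb n c ys \<in> Y" "vanish M0 (comb n c ys)" using combY[of n c] unfolding Y'_def by auto
    ultimately show "\<forall>g\<in>G. val g (comb n c ys) \<le> (C1*b)*m" using d1 by (simp add: mult.assoc)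
  qed
  have lo2: "\<forall>(n::nat) c k. k<n \<longrightarrow> (\<forall>j<n. \<bar>c j\<bar> \<le> \<bar>c k\<bar>) \<longrightarrow> (\<exists>g\<in>G. (a/(2*C2))*\<bar>c k\<bar> \<le> val g (comb n c ys))"
  proof (intro allI impI)
    fix n :: nat and c :: "nat \<Rightarrow> real" and k
    assume kn: "k < n" and mx: "\<forall>j<n. \<bar>c j\<bar> \<le> \<bar>c k\<bar>"
    obtain g' where g': "g' \<in> G'" "a*\<bar>c k\<bar> \<le> val g' (comb n c ys)" using lo kn mx by blast
    have vM: "vanish M0 (comb n c ys)" using combY[of n c] unfolding Y'_def by auto
    show "\<exists>g\<in>G. (a/(2*C2))*\<bar>c k\<bar> \<le> val g (comb n c ys)"
    proof (cases "c k = 0")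
      case True
      obtain g where "g \<in> G" using Gne by blast
      moreover have "0 \<le> val g (comb n c ys)" using wf \<open>g \<in> G\<close> unfolding wfG_def by (simp add: val_nonneg)
      ultimately show ?thesis using True by auto
    next
      case False
      show ?thesis
      proof (rule ccontr)
        assume "\<not> ?thesis"
        hence "\<forall>g\<in>G. val g (comb n c ys) \<le> (a/(2*C2))*\<bar>c k\<bar>" by auto
        hence "\<forall>g'\<in>G'. val g' (comb n c ys) \<le> C2*((a/(2*C2))*\<bar>c k\<bar>)" using d2 vM by blast
        hence "a*\<bar>c k\<bar> \<le> C2*((a/(2*C2))*\<bar>c k\<bar>)" using g' by fastforce
        also have "\<dots> = (a*\<bar>c k\<bar>)/2" using C2 by simp
        finally have "a*\<bar>c k\<bar> \<le> 0" by simp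
        moreover have "0 < a*\<bar>c k\<bar>" using ab False by simp
        ultimately show False by simp
      qed
    qed
  qed
  have "0 < a/(2*C2)" "0 < C1*b" using ab C1 C2 by auto
  moreover have "\<forall>k. ys k \<in> Y \<and> vanish k (ys k)" using ysk unfolding Y'_def by auto
  ultimately show ?thesis unfolding c0seq_def using up2 lo2 by blast
qed

lemma home_block:
  assumes sm: "strict_mono (Mp::nat\<Rightarrow>nat)" and m: "Mp 0 \<le> m"
  shows "\<exists>k. Mp k \<le> m \<and> m < Mp (Suc k)"
proof -
  have ex: "\<exists>k. m < Mp (Suc k)"
  proof -
    have "Suc m \<le> Mp (Suc m)" using sm by (rule strict_mono_imp_increasing)
    thus ?thesis by (intro exI[of _ m]) simp
  qed
  define k where "k = (LEAST k. m < Mp (Suc k))"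
  have k1: "m < Mp (Suc k)" unfolding k_def using ex by (rule LeastI_ex)
  have "Mp k \<le> m"
  proof (cases k)
    case 0 then show ?thesis using m by simp
  next
    case (Suc k')
    have "\<not> m < Mp (Suc k')" unfolding k_def
      using Suc not_less_Least[of k' "\<lambda>k. m < Mp (Suc k)"] k_def by simp
    thus ?thesis using Suc by simp
  qed
  thus ?thesis using k1 by blast
qed

lemma sum_ub:
  fixes f :: "nat \<Rightarrow> real"
  assumes "\<forall>j<n. f j \<le> (if j = k then 1 else 0) + e j + 3*(1/2)^j"
    and "(\<Sum>j<n. e j) \<le> 1"
  shows "(\<Sum>j<n. f j) \<le> 8"
proof -
  have "(\<Sum>j<n. f j) \<le> (\<Sum>j<n. (if j = k then 1 else 0) + e j + 3*(1/2)^j)"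
    using assms(1) by (intro sum_mono) auto
  also have "\<dots> = (\<Sum>j<n. (if j = k then 1 else 0::real)) + (\<Sum>j<n. e j) + 3*(\<Sum>j<n. (1/2::real)^j)"
    by (simp add: sum.distrib sum_distrib_left)
  also have "(\<Sum>j<n. (if j = k then 1 else 0::real)) \<le> 1"
    by (simp add: sum.delta)
  finally show ?thesis using assms(2) geo_le[of n] by linarith
qed


lemma tri: "ord_least (\<alpha>::'o::wellorder) \<or> (\<exists>\<beta>. ord_succ_of \<alpha> \<beta>) \<or> ord_limit \<alpha>"
  unfolding ord_limit_def by blast

lemma least_nlt: "ord_least (\<alpha>::'o::wellorder) \<Longrightarrow> \<not> \<delta> < \<alpha>"
  unfolding ord_least_def by (simp add: not_less)

lemma succ_lt: "ord_succ_of (\<alpha>::'o::wellorder) \<beta> \<Longrightarrow> \<beta> < \<alpha>"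
  unfolding ord_succ_of_def by blast

lemma succ_le: "ord_succ_of (\<alpha>::'o::wellorder) \<beta> \<Longrightarrow> \<delta> < \<alpha> \<Longrightarrow> \<delta> \<le> \<beta>"
  unfolding ord_succ_of_def using not_le by blast

lemma tf_all:
  assumes "transfinite_family A F"
  shows "(\<forall>\<alpha>. ord_limit \<alpha> \<longrightarrow>
        (\<forall>n. finite (A n \<alpha>) \<and> A n \<alpha> \<subseteq> {..<\<alpha>} \<and> A n \<alpha> \<subseteq> A (Suc n) \<alpha>) \<and>
        (\<forall>\<beta><\<alpha>. \<exists>n. \<exists>\<gamma>\<in>A n \<alpha>. \<beta> \<le> \<gamma>)) \<and>
     (\<forall>\<alpha>. ord_least \<alpha> \<longrightarrow> F \<alpha> = {{}}) \<and>
     (\<forall>\<alpha> \<beta>. ord_succ_of \<alpha> \<beta> \<longrightarrow> F \<alpha> = {insert n E | n E. E \<in> F \<beta>} \<union> {{}}) \<and>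
     (\<forall>\<alpha>. ord_limit \<alpha> \<longrightarrow>
        F \<alpha> = {{}} \<union> {E. E \<noteq> {} \<and> finite E \<and> (\<exists>\<beta>\<in>A (Min E) \<alpha>. E \<in> F \<beta>)})"
  using assms unfolding transfinite_family_def by assumption

lemma tf_least: "transfinite_family A F \<Longrightarrow> ord_least \<alpha> \<Longrightarrow> F \<alpha> = {{}}"
  by (rule tf_all[THEN conjunct2, THEN conjunct1, rule_format])
lemma tf_succ: "transfinite_family A F \<Longrightarrow> ord_succ_of \<alpha> \<beta> \<Longrightarrow> F \<alpha> = {insert n E | n E. E \<in> F \<beta>} \<union> {{}}"
  by (rule tf_all[THEN conjunct2, THEN conjunct2, THEN conjunct1, rule_format])
lemma tf_limit: "transfinite_family A F \<Longrightarrow> ord_limit \<alpha> \<Longrightarrow>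
   F \<alpha> = {{}} \<union> {E. E \<noteq> {} \<and> finite E \<and> (\<exists>\<beta>\<in>A (Min E) \<alpha>. E \<in> F \<beta>)}"
  by (rule tf_all[THEN conjunct2, THEN conjunct2, THEN conjunct2, rule_format])
lemma tf_A0: "transfinite_family A F \<Longrightarrow> ord_limit \<alpha> \<Longrightarrow>
   (\<forall>n. finite (A n \<alpha>) \<and> A n \<alpha> \<subseteq> {..<\<alpha>} \<and> A n \<alpha> \<subseteq> A (Suc n) \<alpha>) \<and>
        (\<forall>\<beta><\<alpha>. \<exists>n. \<exists>\<gamma>\<in>A n \<alpha>. \<beta> \<le> \<gamma>)"
  by (rule tf_all[THEN conjunct1, rule_format])
lemma tf_A: assumes "transfinite_family A F" "ord_limit \<alpha>" shows
   "finite (A n \<alpha>) \<and> A n \<alpha> \<subseteq> {..<\<alpha>}"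
  using tf_A0[OF assms] by simp
lemma tf_cof: assumes "transfinite_family A F" "ord_limit \<alpha>" "\<beta> < \<alpha>" shows "\<exists>n. \<exists>\<gamma>\<in>A n \<alpha>. \<beta> \<le> \<gamma>"
  using tf_A0[OF assms(1,2)] assms(3) by simp
lemma tf_Asuc: assumes "transfinite_family A F" "ord_limit \<alpha>" shows "A n \<alpha> \<subseteq> A (Suc n) \<alpha>"
  using tf_A0[OF assms] by simp
lemma tf_Amono: "transfinite_family A F \<Longrightarrow> ord_limit \<alpha> \<Longrightarrow> n \<le> m \<Longrightarrow> A n \<alpha> \<subseteq> A m \<alpha>"
proof -
  assume tf: "transfinite_family A F" and l: "ord_limit \<alpha>" and nm: "n \<le> m"
  have "\<And>n. A n \<alpha> \<subseteq> A (Suc n) \<alpha>" using tf_Asuc[OF tf l] by blast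
  thus ?thesis using nm by (rule lift_Suc_mono_le)
qed
lemma F_empty: assumes tf: "transfinite_family A F" shows "{} \<in> F \<alpha>"
proof -
  consider "ord_least \<alpha>" | \<beta> where "ord_succ_of \<alpha> \<beta>" | "ord_limit \<alpha>" using tri[of \<alpha>] by blast
  then show ?thesis
  proof cases
    case 1 then show ?thesis using tf_least[OF tf] by simp
  next
    case 2 show ?thesis by (subst tf_succ[OF tf 2]) simp
  next
    case 3 show ?thesis by (subst tf_limit[OF tf 3]) simp
  qed
qed

lemma F_finite: "transfinite_family A F \<Longrightarrow> E \<in> F \<alpha> \<Longrightarrow> finite E"
proof (induction \<alpha> arbitrary: E rule: less_induct)
  case (less \<alpha>)
  show ?case
  proof (cases "ord_least \<alpha>")
    case True then show ?thesis using tf_least[OF less.prems(1)] less.prems(2) by auto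
  next
    case False
    show ?thesis
    proof (cases "\<exists>\<beta>. ord_succ_of \<alpha> \<beta>")
      case True
      then obtain \<beta> where b: "ord_succ_of \<alpha> \<beta>" by blast
      have "E \<in> {insert n E | n E. E \<in> F \<beta>} \<union> {{}}" using tf_succ[OF less.prems(1) b] less.prems(2) by simp
      then show ?thesis using less.IH[OF succ_lt[OF b] less.prems(1)] by auto
    next
      case False
      hence "ord_limit \<alpha>" using \<open>\<not> ord_least \<alpha>\<close> unfolding ord_limit_def by blast
      then show ?thesis using tf_limit[OF less.prems(1)] less.prems(2) by auto
    qed
  qed
qed

lemma F_succ_sub: "transfinite_family A F \<Longrightarrow> ord_succ_of \<alpha> \<beta> \<Longrightarrow> F \<beta> \<subseteq> F \<alpha>"
proof
  fix E assume tf: "transfinite_family A F" and b: "ord_succ_of \<alpha> \<beta>" and E: "E \<in> F \<beta>"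
  show "E \<in> F \<alpha>"
  proof (cases "E = {}")
    case True then show ?thesis using F_empty[OF tf] by simp
  next
    case False
    then obtain n where "n \<in> E" by blast
    hence "E = insert n E" by blast
    then show ?thesis using E by (subst tf_succ[OF tf b]) blast
  qed
qed

lemma F_hered: "transfinite_family A F \<Longrightarrow> E \<in> F \<alpha> \<Longrightarrow> E' \<subseteq> E \<Longrightarrow> E' \<in> F \<alpha>"
proof (induction \<alpha> arbitrary: E E' rule: less_induct)
  case (less \<alpha>)
  note tf = less.prems(1)
  show ?case
  proof (cases "ord_least \<alpha>")
    case True then show ?thesis using tf_least[OF tf] less.prems by auto
  next
    case False
    show ?thesis
    proof (cases "\<exists>\<beta>. ord_succ_of \<alpha> \<beta>")
      case True
      then obtain \<beta> where b: "ord_succ_of \<alpha> \<beta>" by blast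
      have "E \<in> {insert n E | n E. E \<in> F \<beta>} \<union> {{}}" using tf_succ[OF tf b] less.prems(2) by simp
      then consider "E = {}" | n E0 where "E = insert n E0" "E0 \<in> F \<beta>" by blast
      then show ?thesis
      proof cases
        case 1 then show ?thesis using less.prems(3) F_empty[OF tf] by auto
      next
        case 2
        have s: "E' - {n} \<in> F \<beta>" using less.IH[OF succ_lt[OF b] tf 2(2)] 2(1) less.prems(3) by blast
        show ?thesis
        proof (cases "n \<in> E'")
          case True
          hence "E' = insert n (E' - {n})" by blast
          then show ?thesis using s by (subst tf_succ[OF tf b]) blast
        next
          case False
          hence "E' - {n} = E'" by blast
          then show ?thesis using s F_succ_sub[OF tf b] by auto
        qed
      qed
    next
      case False
      hence l: "ord_limit \<alpha>" using \<open>\<not> ord_least \<alpha>\<close> unfolding ord_limit_def by blast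
      show ?thesis
      proof (cases "E' = {}")
        case True then show ?thesis using F_empty[OF tf] by simp
      next
        case ne': False
        hence ne: "E \<noteq> {}" using less.prems(3) by blast
        have "E \<in> {{}} \<union> {E. E \<noteq> {} \<and> finite E \<and> (\<exists>\<beta>\<in>A (Min E) \<alpha>. E \<in> F \<beta>)}"
          using less.prems(2) tf_limit[OF tf l] by simp
        hence "E \<in> {E. E \<noteq> {} \<and> finite E \<and> (\<exists>\<beta>\<in>A (Min E) \<alpha>. E \<in> F \<beta>)}"
          using ne by blast
        then obtain \<beta> where fE: "finite E" and b: "\<beta> \<in> A (Min E) \<alpha>" "E \<in> F \<beta>" by blast
        have bl: "\<beta> < \<alpha>" using tf_A[OF tf l] b(1) by blast
        have "E' \<in> F \<beta>" using less.IH[OF bl tf b(2) less.prems(3)] .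
        moreover have fE': "finite E'" using fE less.prems(3) finite_subset by blast
        moreover have "Min E \<le> Min E'" using Min_antimono[OF less.prems(3) ne' fE] .
        hence "\<beta> \<in> A (Min E') \<alpha>" using tf_Amono[OF tf l] b(1) by blast
        ultimately show ?thesis using ne' by (subst tf_limit[OF tf l]) blast
      qed
    qed
  qed
qed

lemma F_sing: "transfinite_family A F \<Longrightarrow> \<not> ord_least \<alpha> \<Longrightarrow> \<exists>K. \<forall>m\<ge>K. {m} \<in> F \<alpha>"
proof (induction \<alpha> rule: less_induct)
  case (less \<alpha>)
  note tf = less.prems(1)
  show ?case
  proof (cases "\<exists>\<beta>. ord_succ_of \<alpha> \<beta>")
    case True
    then obtain \<beta> where b: "ord_succ_of \<alpha> \<beta>" by blast
    have "\<forall>m. {m} \<in> F \<alpha>"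
    proof
      fix m :: nat
      have "{m} = insert m {}" by simp
      thus "{m} \<in> F \<alpha>" using F_empty[OF tf, of \<beta>] by (subst tf_succ[OF tf b]) blast
    qed
    then show ?thesis by blast
  next
    case False
    hence l: "ord_limit \<alpha>" using less.prems(2) unfolding ord_limit_def by blast
    define \<beta>0 where "\<beta>0 = (LEAST x::'a. True)"
    have b0: "\<And>x. \<beta>0 \<le> x" unfolding \<beta>0_def by (simp add: Least_le)
    obtain \<beta>1 where "\<not> \<alpha> \<le> \<beta>1" using less.prems(2) unfolding ord_least_def by blast
    hence "\<beta>1 < \<alpha>" by simp
    hence b0a: "\<beta>0 < \<alpha>" using b0[of \<beta>1] by (rule le_less_trans[rotated])
    moreover have "\<not> ord_succ_of \<alpha> \<beta>0" using False by blast
    ultimately have "\<exists>\<gamma>. \<beta>0 < \<gamma> \<and> \<gamma> < \<alpha>" unfolding ord_succ_of_def by simp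
    then obtain \<gamma> where g: "\<beta>0 < \<gamma>" "\<gamma> < \<alpha>" by blast
    obtain n \<gamma>' where g': "\<gamma>' \<in> A n \<alpha>" "\<gamma> \<le> \<gamma>'" using tf_cof[OF tf l g(2)] by blast
    have g'l: "\<gamma>' < \<alpha>" using tf_A[OF tf l] g'(1) by blast
    have "\<not> ord_least \<gamma>'"
    proof
      assume "ord_least \<gamma>'"
      hence "\<gamma>' \<le> \<beta>0" unfolding ord_least_def by blast
      hence "\<gamma> \<le> \<beta>0" using g'(2) by (rule order_trans[rotated])
      thus False using g(1) by (simp add: leD)
    qed
    then obtain K where K: "\<forall>m\<ge>K. {m} \<in> F \<gamma>'" using less.IH[OF g'l tf] by blast
    have "\<forall>m\<ge>max K n. {m} \<in> F \<alpha>"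
    proof (intro allI impI)
      fix m :: nat assume m: "max K n \<le> m"
      have "\<gamma>' \<in> A m \<alpha>" using tf_Amono[OF tf l, of n m] m g'(1) by auto
      moreover have "Min {m} = m" by simp
      ultimately show "{m} \<in> F \<alpha>" using K m by (subst tf_limit[OF tf l]) auto
    qed
    then show ?thesis by blast
  qed
qed


definition GB :: "('o \<Rightarrow> nat set set) \<Rightarrow> 'o set \<Rightarrow> (real \<times> nat set) set" where
  "GB F B = insert (1,{}) {(1,E) | E \<beta>. \<beta> \<in> B \<and> E \<in> F \<beta>}"

lemma GB_mem: "\<beta> \<in> B \<Longrightarrow> E \<in> F \<beta> \<Longrightarrow> (1,E) \<in> GB F B"
  unfolding GB_def by blast
lemma GB_z: "(1,{}) \<in> GB F B"
  unfolding GB_def by blast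
lemma GB_cases: "g \<in> GB F B \<Longrightarrow> g = (1,{}) \<or> (\<exists>E \<beta>. g = (1,E) \<and> \<beta> \<in> B \<and> E \<in> F \<beta>)"
  unfolding GB_def by blast
lemma GB_wf: "transfinite_family A F \<Longrightarrow> wfG (GB F B)"
  unfolding wfG_def GB_def using F_finite by fastforce

lemma val1: "val (1,E) y = (\<Sum>i\<in>E. \<bar>y i\<bar>)" by (simp add: val_def)
lemma val0: "val (c,{}) y = 0" by (simp add: val_def)
lemma val_sing: "val (1,{m}) y = \<bar>y m\<bar>" by (simp add: val_def)

lemma val_insert: "finite E0 \<Longrightarrow> val (1, insert m E0) y \<le> \<bar>y m\<bar> + val (1,E0) y"
  unfolding val1 by (cases "m \<in> E0") (auto simp: insert_absorb)

lemma half_pow: "(1/2::real)^(j+3) \<le> (1/2)^j"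
  by (rule power_decreasing) auto

lemma QQ_vac: "(\<forall>g\<in>G. \<forall>y. val g y \<le> 0) \<Longrightarrow> QQ G"
  unfolding QQ_def by (meson not_le)

lemma dich:
  fixes G :: "(real \<times> nat set) set" and G' :: "nat \<Rightarrow> (real \<times> nat set) set" and P :: "nat \<Rightarrow> nat \<Rightarrow> nat"
  assumes lin: "lin_subspace Y" and tn: "\<forall>y\<in>Y. tailnull G y" and wf: "wfG G"
    and z: "\<forall>p. (1,{}) \<in> G' p"
    and caseA: "\<And>p M C. C > 0 \<Longrightarrow> (\<forall>y\<in>Y. vanish M y \<longrightarrow> (\<forall>r. (\<forall>g'\<in>G' p. val g' y \<le> r) \<longrightarrow> (\<forall>g\<in>G. val g y \<le> C*r))) \<Longrightarrow> c0seq G Y"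
    and caseB: "\<And>ys Mp. Mp 0 = Mstart \<Longrightarrow> strict_mono Mp \<Longrightarrow> (\<forall>k. ys k \<in> Y) \<Longrightarrow>
     (\<And>k. vanish (Mp k) (ys k)) \<Longrightarrow> (\<And>k g. g \<in> G \<Longrightarrow> val g (ys k) \<le> 1) \<Longrightarrow>
     (\<forall>k. \<exists>g\<in>G. 1/2 < val g (ys k)) \<Longrightarrow>
     (\<And>k g. g \<in> G' (P k (Mp k)) \<Longrightarrow> val g (ys k) \<le> (1/2)^k) \<Longrightarrow>
     (\<And>k g. g \<in> G \<Longrightarrow> val g (tailv (Mp (Suc k)) (ys k)) \<le> (1/2)^(k+3)) \<Longrightarrow> c0seq G Y"
  shows "c0seq G Y"
proof (cases "\<exists>p M C. C > 0 \<and> (\<forall>y\<in>Y. vanish M y \<longrightarrow> (\<forall>r. (\<forall>g'\<in>G' p. val g' y \<le> r) \<longrightarrow> (\<forall>g\<in>G. val g y \<le> C*r)))")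
  case True
  then show ?thesis using caseA by blast
next
  case False
  have notA: "\<forall>k M C. C>0 \<longrightarrow> (\<exists>y\<in>Y. vanish M y \<and> (\<exists>r. (\<forall>g\<in>G' (P k M). val g y \<le> r) \<and> (\<exists>g\<in>G. C*r < val g y)))"
  proof (intro allI impI)
    fix k M and C :: real assume C: "C > 0"
    have "\<not> (\<forall>y\<in>Y. vanish M y \<longrightarrow> (\<forall>r. (\<forall>g'\<in>G' (P k M). val g' y \<le> r) \<longrightarrow> (\<forall>g\<in>G. val g y \<le> C*r)))"
      using False C by blast
    thus "\<exists>y\<in>Y. vanish M y \<and> (\<exists>r. (\<forall>g\<in>G' (P k M). val g y \<le> r) \<and> (\<exists>g\<in>G. C*r < val g y))"
      by (auto simp: not_le)
  qed
  have z': "\<forall>k M. (1,{}) \<in> G' (P k M)" using z by blast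
  obtain ys Mp where E: "Mp 0 = Mstart" "strict_mono Mp" and H: "\<forall>k. ys k \<in> Y \<and> vanish (Mp k) (ys k) \<and>
     (\<forall>g\<in>G. val g (ys k) \<le> 1) \<and> (\<exists>g\<in>G. 1/2 < val g (ys k)) \<and>
     (\<forall>g\<in>G' (P k (Mp k)). val g (ys k) \<le> (1/2)^k) \<and>
     (\<forall>g\<in>G. val g (tailv (Mp (Suc k)) (ys k)) \<le> (1/2)^(k+3))"
    using engine[OF lin tn wf z' notA, of Mstart] by blast
  have HY: "\<forall>k. ys k \<in> Y" using H by blast
  have Hb: "\<forall>k. \<exists>g\<in>G. 1/2 < val g (ys k)" using H by blast
  show ?thesis
  proof (rule caseB[OF E HY _ _ Hb])
    fix k show "vanish (Mp k) (ys k)" using H by blast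
  next
    fix k g assume "g \<in> G" thus "val g (ys k) \<le> 1" using H by blast
  next
    fix k g assume "g \<in> G' (P k (Mp k))" thus "val g (ys k) \<le> (1/2)^k" using H by blast
  next
    fix k g assume "g \<in> G" thus "val g (tailv (Mp (Suc k)) (ys k)) \<le> (1/2)^(k+3)" using H by blast
  qed
qed

lemma succ_case:
  assumes tf: "transfinite_family A F" and b: "ord_succ_of \<gamma> \<beta>"
    and Q': "QQ (GB F (insert \<beta> B0))" and lin: "lin_subspace Y"
    and tn: "\<forall>y\<in>Y. tailnull (GB F (insert \<gamma> B0)) y"
    and pos: "\<forall>M. \<exists>y\<in>Y. vanish M y \<and> (\<exists>g\<in>GB F (insert \<gamma> B0). 0 < val g y)"
  shows "c0seq (GB F (insert \<gamma> B0)) Y"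
proof -
  define G where "G = GB F (insert \<gamma> B0)"
  define G' where "G' = GB F (insert \<beta> B0)"
  have wf: "wfG G" unfolding G_def by (rule GB_wf[OF tf])
  have sub: "G' \<subseteq> G"
    unfolding G_def G'_def GB_def using F_succ_sub[OF tf b] by blast
  show ?thesis unfolding G_def[symmetric]
  proof (rule dich[where G'="\<lambda>_. G'" and P="\<lambda>_ _. 0" and Mstart=0, OF lin tn[folded G_def] wf])
    show "\<forall>p. (1, {}) \<in> G'" unfolding G'_def by (simp add: GB_z)
  next
    fix p M and C :: real assume C: "C > 0" and d1: "\<forall>y\<in>Y. vanish M y \<longrightarrow> (\<forall>r. (\<forall>g'\<in>G'. val g' y \<le> r) \<longrightarrow> (\<forall>g\<in>G. val g y \<le> C*r))"
    have d2: "\<forall>y. vanish M y \<longrightarrow> (\<forall>r. (\<forall>g\<in>G. val g y \<le> r) \<longrightarrow> (\<forall>g'\<in>G'. val g' y \<le> 1*r))"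
      using sub by auto
    show "c0seq G Y"
      using transferA[OF Q'[folded G'_def] lin tn[folded G_def] pos[folded G_def] wf C d1 _ d2] by simp
  next
    fix ys Mp assume Mp0: "Mp 0 = (0::nat)" and sm: "strict_mono Mp" and HY: "\<forall>k. ys k \<in> Y"
      and Hv: "\<And>k. vanish (Mp k) (ys k)" and H1: "\<And>k g. g \<in> G \<Longrightarrow> val g (ys k) \<le> 1"
      and Hb: "\<forall>k. \<exists>g\<in>G. 1/2 < val g (ys k)"
      and H'': "\<And>k g. g \<in> G' \<Longrightarrow> val g (ys k) \<le> (1/2)^k"
      and Ht: "\<And>k g. g \<in> G \<Longrightarrow> val g (tailv (Mp (Suc k)) (ys k)) \<le> (1/2)^(k+3)"
    have up: "\<forall>g\<in>G. \<forall>n. (\<Sum>j<n. val g (ys j)) \<le> 8"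
    proof (intro ballI allI)
      fix g n assume gG: "g \<in> G"
      have smallG': "\<And>j. g \<in> G' \<Longrightarrow> val g (ys j) \<le> (if j = 0 then 1 else 0) + 0 + 3*(1/2)^j"
      proof -
        fix j assume "g \<in> G'"
        hence "val g (ys j) \<le> (1/2)^j" by (rule H'')
        moreover have "(0::real) \<le> (1/2)^j" by simp
        moreover have "(0::real) \<le> (if j = 0 then 1 else 0)" by simp
        ultimately show "val g (ys j) \<le> (if j = 0 then 1 else 0) + 0 + 3*(1/2)^j" by linarith
      qed
      consider "g = (1,{})" | E \<beta>' where "g = (1,E)" "\<beta>' \<in> insert \<gamma> B0" "E \<in> F \<beta>'"
        using GB_cases[OF gG[unfolded G_def]] by blast
      then show "(\<Sum>j<n. val g (ys j)) \<le> 8"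
      proof cases
        case 1 then show ?thesis by (simp add: val0)
      next
        case 2
        show ?thesis
        proof (cases "\<beta>' \<in> B0")
          case True
          have "(1,E) \<in> GB F (insert \<beta> B0)" using True 2(3) by (intro GB_mem) auto
          hence "g \<in> G'" unfolding G'_def using 2(1) by simp
          hence "\<forall>j<n. val g (ys j) \<le> (if j = 0 then 1 else 0) + 0 + 3*(1/2)^j" using smallG' by blast
          then show ?thesis by (rule sum_ub[where e="\<lambda>_. 0" and k=0]) simp
        next
          case False
          hence "E \<in> F \<gamma>" using 2 by auto
          hence "E \<in> {insert n E | n E. E \<in> F \<beta>} \<union> {{}}" using tf_succ[OF tf b] by simp
          then consider "E = {}" | m E0 where "E = insert m E0" "E0 \<in> F \<beta>" by blast
          then show ?thesis
          proof cases
            case 1 then show ?thesis using 2 by (simp add: val0)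
          next
            case 3: 2
            have fE0: "finite E0" using F_finite[OF tf 3(2)] .
            have E0G': "(1,E0) \<in> G'" unfolding G'_def using 3(2) by (intro GB_mem) auto
            have sing: "(1,{m}) \<in> G"
            proof -
              have "{m} = insert m {}" by simp
              hence "{m} \<in> F \<gamma>" using F_empty[OF tf, of \<beta>] by (subst tf_succ[OF tf b]) blast
              thus ?thesis unfolding G_def by (intro GB_mem) auto
            qed
            obtain k where k: "Mp k \<le> m" "m < Mp (Suc k)" using home_block[OF sm] Mp0 by auto
            have bnd: "\<And>j. \<bar>ys j m\<bar> \<le> (if j = k then 1 else 0) + (1/2)^(j+3)"
            proof -
              fix j
              consider "j < k" | "j = k" | "k < j" by linarith
              then show "\<bar>ys j m\<bar> \<le> (if j = k then 1 else 0) + (1/2)^(j+3)"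
              proof cases
                case 1
                hence "Mp (Suc j) \<le> Mp k" using sm by (simp add: strict_mono_less_eq)
                hence "\<bar>ys j m\<bar> = val (1,{m}) (tailv (Mp (Suc j)) (ys j))"
                  using k unfolding val_sing tailv_def by simp
                also have "\<dots> \<le> (1/2)^(j+3)" using Ht[OF sing] .
                finally show ?thesis using 1 by simp
              next
                case 2
                have a: "\<bar>ys j m\<bar> \<le> 1" using H1[OF sing] by (simp add: val_sing)
                have h: "(0::real) \<le> (1/2)^(j+3)" by simp
                have i: "(if j = k then 1 else 0::real) = 1" using 2 by simp
                show ?thesis using a h i by linarith
              next
                case 3
                hence "Mp (Suc k) \<le> Mp j" using sm by (simp add: strict_mono_less_eq)
                hence "ys j m = 0" using Hv[of j] k unfolding vanish_def by auto
                then show ?thesis by simp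
              qed
            qed
            have "\<forall>j<n. val g (ys j) \<le> (if j = k then 1 else 0) + 0 + 3*(1/2)^j"
            proof (intro allI impI)
              fix j assume "j < n"
              have "val g (ys j) \<le> \<bar>ys j m\<bar> + val (1,E0) (ys j)"
                using 2(1) 3(1) val_insert[OF fE0] by simp
              also have "\<dots> \<le> ((if j = k then 1 else 0) + (1/2)^(j+3)) + (1/2)^j"
                using bnd[of j] H''[OF E0G', of j] by (rule add_mono)
              also have "\<dots> \<le> (if j = k then 1 else 0) + 0 + 3*(1/2)^j" using half_pow[of j] zero_le_power[of "1/2::real" j] by linarith
              finally show "val g (ys j) \<le> (if j = k then 1 else 0) + 0 + 3*(1/2)^j" .
            qed
            then show ?thesis by (intro sum_ub[where e="\<lambda>_. 0"]) auto
          qed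
        qed
      qed
    qed
    show "c0seq G Y"
      by (rule finish[OF wf HY sm _ _ Hb _ up]) (use Hv H1 Ht in auto)
  qed
qed


lemma val_restrict:
  assumes fE: "finite E" and v: "vanish M0 y"
  shows "val (1,E) y = val (1,{i\<in>E. M0 \<le> i}) y"
  unfolding val1
proof (rule sum.mono_neutral_right[OF fE])
  show "{i\<in>E. M0 \<le> i} \<subseteq> E" by blast
  show "\<forall>i\<in>E - {i\<in>E. M0 \<le> i}. \<bar>y i\<bar> = 0"
  proof
    fix i assume "i \<in> E - {i\<in>E. M0 \<le> i}"
    hence "i < M0" by auto
    thus "\<bar>y i\<bar> = 0" using v by (simp add: vanish_def)
  qed
qed

lemma limit_mem:
  assumes tf: "transfinite_family A F" and l: "ord_limit lm"
    and ne: "E \<noteq> {}" and fE: "finite E" and b: "\<beta> \<in> A n lm" and E: "E \<in> F \<beta>"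
    and n: "\<forall>i\<in>E. n \<le> i"
  shows "E \<in> F lm"
proof -
  have "n \<le> Min E" using n fE ne by simp
  hence "A n lm \<subseteq> A (Min E) lm" by (rule tf_Amono[OF tf l])
  hence "\<beta> \<in> A (Min E) lm" using b by (rule subsetD)
  thus ?thesis using ne fE E by (subst tf_limit[OF tf l]) blast
qed

lemma limit_case:
  assumes tf: "transfinite_family A F" and l: "ord_limit lm"
    and Q': "\<And>n. QQ (GB F (B0 \<union> A n lm))" and lin: "lin_subspace Y"
    and tn: "\<forall>y\<in>Y. tailnull (GB F (insert lm B0)) y"
    and pos: "\<forall>M. \<exists>y\<in>Y. vanish M y \<and> (\<exists>g\<in>GB F (insert lm B0). 0 < val g y)"
  shows "c0seq (GB F (insert lm B0)) Y"
proof -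
  define G where "G = GB F (insert lm B0)"
  define G' where "G' = (\<lambda>p. GB F (B0 \<union> A p lm))"
  have wf: "wfG G" unfolding G_def by (rule GB_wf[OF tf])
  have zG: "(1,{}) \<in> G" unfolding G_def by (rule GB_z)
  show ?thesis unfolding G_def[symmetric]
  proof (rule dich[where G'=G' and P="\<lambda>_ M. M" and Mstart=0, OF lin tn[folded G_def] wf])
    show "\<forall>p. (1, {}) \<in> G' p" unfolding G'_def by (simp add: GB_z)
  next
    fix p M and C :: real assume C: "C > 0" and d1: "\<forall>y\<in>Y. vanish M y \<longrightarrow> (\<forall>r. (\<forall>g'\<in>G' p. val g' y \<le> r) \<longrightarrow> (\<forall>g\<in>G. val g y \<le> C*r))"
    define M0 where "M0 = max M p"
    have d1': "\<forall>y\<in>Y. vanish M0 y \<longrightarrow> (\<forall>r. (\<forall>g'\<in>G' p. val g' y \<le> r) \<longrightarrow> (\<forall>g\<in>G. val g y \<le> C*r))"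
      using d1 unfolding M0_def vanish_def by auto
    have d2: "\<forall>y. vanish M0 y \<longrightarrow> (\<forall>r. (\<forall>g\<in>G. val g y \<le> r) \<longrightarrow> (\<forall>g'\<in>G' p. val g' y \<le> 1*r))"
    proof (intro allI impI ballI)
      fix y r g' assume v: "vanish M0 y" and r: "\<forall>g\<in>G. val g y \<le> r" and g': "g' \<in> G' p"
      have r0: "0 \<le> r" using r zG by (force simp: val0)
      consider "g' = (1,{})" | E \<beta> where "g' = (1,E)" "\<beta> \<in> B0 \<union> A p lm" "E \<in> F \<beta>"
        using GB_cases[OF g'[unfolded G'_def]] by blast
      then show "val g' y \<le> 1*r"
      proof cases
        case 1 then show ?thesis using r0 by (simp add: val0)
      next
        case 2
        show ?thesis
        proof (cases "\<beta> \<in> B0")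
          case True
          have "(1,E) \<in> G" unfolding G_def using True 2(3) by (intro GB_mem) auto
          then show ?thesis using r 2(1) by simp
        next
          case False
          hence bA: "\<beta> \<in> A p lm" using 2(2) by blast
          have fE: "finite E" using F_finite[OF tf 2(3)] .
          define E' where "E' = {i\<in>E. M0 \<le> i}"
          have eq: "val g' y = val (1,E') y" using val_restrict[OF fE v] 2(1) E'_def by simp
          have E'F: "E' \<in> F \<beta>" unfolding E'_def by (rule F_hered[OF tf 2(3)]) blast
          show ?thesis
          proof (cases "E' = {}")
            case True then show ?thesis using eq r0 by (simp add: val0)
          next
            case False
            have "E' \<in> F lm"
            proof (rule limit_mem[OF tf l False _ bA E'F])
              show "finite E'" using fE E'_def by simp
              show "\<forall>i\<in>E'. p \<le> i" unfolding E'_def M0_def by auto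
            qed
            hence "(1,E') \<in> G" unfolding G_def by (intro GB_mem) auto
            then show ?thesis using r eq by simp
          qed
        qed
      qed
    qed
    have Qp: "QQ (G' p)" unfolding G'_def by (rule Q')
    show "c0seq G Y"
      using transferA[OF Qp lin tn[folded G_def] pos[folded G_def] wf C d1' _ d2] by simp
  next
    fix ys Mp assume Mp0: "Mp 0 = (0::nat)" and sm: "strict_mono Mp" and HY: "\<forall>k. ys k \<in> Y"
      and Hv: "\<And>k. vanish (Mp k) (ys k)" and H1: "\<And>k g. g \<in> G \<Longrightarrow> val g (ys k) \<le> 1"
      and Hb: "\<forall>k. \<exists>g\<in>G. 1/2 < val g (ys k)"
      and H'': "\<And>k g. g \<in> G' (Mp k) \<Longrightarrow> val g (ys k) \<le> (1/2)^k"
      and Ht: "\<And>k g. g \<in> G \<Longrightarrow> val g (tailv (Mp (Suc k)) (ys k)) \<le> (1/2)^(k+3)"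
    have up: "\<forall>g\<in>G. \<forall>n. (\<Sum>j<n. val g (ys j)) \<le> 8"
    proof (intro ballI allI)
      fix g n assume gG: "g \<in> G"
      consider "g = (1,{})" | E \<beta>' where "g = (1,E)" "\<beta>' \<in> insert lm B0" "E \<in> F \<beta>'"
        using GB_cases[OF gG[unfolded G_def]] by blast
      then show "(\<Sum>j<n. val g (ys j)) \<le> 8"
      proof cases
        case 1 then show ?thesis by (simp add: val0)
      next
        case 2
        show ?thesis
        proof (cases "\<beta>' \<in> B0")
          case True
          have "\<forall>j<n. val g (ys j) \<le> (if j = 0 then 1 else 0) + 0 + 3*(1/2)^j"
          proof (intro allI impI)
            fix j assume "j < n"
            have "(1,E) \<in> G' (Mp j)" unfolding G'_def using True 2(3) by (intro GB_mem) auto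
            hence "val g (ys j) \<le> (1/2)^j" using H'' 2(1) by simp
            moreover have "(0::real) \<le> (1/2)^j" by simp
            moreover have "(0::real) \<le> (if j = 0 then 1 else 0)" by simp
            ultimately show "val g (ys j) \<le> (if j = 0 then 1 else 0) + 0 + 3*(1/2)^j" by linarith
          qed
          then show ?thesis by (rule sum_ub[where e="\<lambda>_. 0" and k=0]) simp
        next
          case False
          hence EF: "E \<in> F lm" using 2 by auto
          show ?thesis
          proof (cases "E = {}")
            case True then show ?thesis using 2(1) by (simp add: val0)
          next
            case False
            have "E \<in> {{}} \<union> {E. E \<noteq> {} \<and> finite E \<and> (\<exists>\<beta>\<in>A (Min E) lm. E \<in> F \<beta>)}"
              using EF tf_limit[OF tf l] by simp
            then obtain \<beta> where fE: "finite E" and bA: "\<beta> \<in> A (Min E) lm" and Eb: "E \<in> F \<beta>"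
              using False by blast
            define m where "m = Min E"
            have mE: "\<forall>i\<in>E. m \<le> i" unfolding m_def using fE by simp
            obtain k where k: "Mp k \<le> m" "m < Mp (Suc k)" using home_block[OF sm] Mp0 by auto
            have gG': "g \<in> G" using gG .
            have "\<forall>j<n. val g (ys j) \<le> (if j = k then 1 else 0) + 0 + 3*(1/2)^j"
            proof (intro allI impI)
              fix j assume "j < n"
              have h0: "(0::real) \<le> (1/2)^j" "(0::real) \<le> (1/2)^(j+3)" by simp_all
              have hp: "(1/2::real)^(j+3) \<le> (1/2)^j" by (rule half_pow)
              consider "j < k" | "j = k" | "k < j" by linarith
              then show "val g (ys j) \<le> (if j = k then 1 else 0) + 0 + 3*(1/2)^j"
              proof cases
                case 1
                hence "Mp (Suc j) \<le> Mp k" using sm by (simp add: strict_mono_less_eq)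
                hence "val g (ys j) = val g (tailv (Mp (Suc j)) (ys j))"
                  using k mE unfolding 2(1) val1 tailv_def by (intro sum.cong refl) auto
                also have "\<dots> \<le> (1/2)^(j+3)" using Ht[OF gG] .
                finally have a: "val g (ys j) \<le> (1/2)^(j+3)" .
                have i: "(if j = k then 1 else 0::real) = 0" using 1 by simp
                show ?thesis using a i h0 hp by linarith
              next
                case 2
                have a: "val g (ys j) \<le> 1" using H1[OF gG] .
                have i: "(if j = k then 1 else 0::real) = 1" using 2 by simp
                show ?thesis using a i h0 by linarith
              next
                case 3
                hence "Mp (Suc k) \<le> Mp j" using sm by (simp add: strict_mono_less_eq)
                hence "m \<le> Mp j" using k by simp
                hence "A m lm \<subseteq> A (Mp j) lm" by (rule tf_Amono[OF tf l])
                hence "\<beta> \<in> A (Mp j) lm" using bA unfolding m_def by (rule subsetD)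
                hence "(1,E) \<in> G' (Mp j)" unfolding G'_def using Eb by (intro GB_mem) auto
                hence a: "val g (ys j) \<le> (1/2)^j" using H'' 2(1) by simp
                have i: "(if j = k then 1 else 0::real) = 0" using 3 by simp
                show ?thesis using a i h0 by linarith
              qed
            qed
            then show ?thesis by (rule sum_ub[where e="\<lambda>_. 0"]) simp
          qed
        qed
      qed
    qed
    show "c0seq G Y"
      by (rule finish[OF wf HY sm _ _ Hb _ up]) (use Hv H1 Ht in auto)
  qed
qed


lemma GB_empty_vac: "QQ (GB F {})"
proof (rule QQ_vac)
  show "\<forall>g\<in>GB F {}. \<forall>y. val g y \<le> 0" unfolding GB_def by (auto simp: val0)
qed

lemma IHset:
  assumes IH: "\<forall>\<gamma>'<\<gamma>. \<forall>B. finite B \<and> (\<forall>\<beta>\<in>B. \<beta> \<le> \<gamma>') \<longrightarrow> QQ (GB F B)"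
    and fB: "finite B'" and lt: "\<forall>\<beta>\<in>B'. \<beta> < (\<gamma>::'o::wellorder)"
  shows "QQ (GB F B')"
proof (cases "B' = {}")
  case True then show ?thesis using GB_empty_vac by simp
next
  case False
  have "Max B' \<in> B'" using fB False by (rule Max_in)
  hence "Max B' < \<gamma>" using lt by blast
  moreover have "\<forall>\<beta>\<in>B'. \<beta> \<le> Max B'" using fB by simp
  ultimately show ?thesis using IH fB by blast
qed

lemma main_QQ:
  assumes tf: "transfinite_family A F" and fB: "finite B"
  shows "QQ (GB F B)"
proof -
  have P: "\<forall>B. finite B \<and> (\<forall>\<beta>\<in>B. \<beta> \<le> \<gamma>) \<longrightarrow> QQ (GB F B)" for \<gamma>
  proof (induction \<gamma> rule: less_induct)
    case (less \<gamma>)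
    have IH: "\<forall>\<gamma>'<\<gamma>. \<forall>B. finite B \<and> (\<forall>\<beta>\<in>B. \<beta> \<le> \<gamma>') \<longrightarrow> QQ (GB F B)" using less by blast
    show ?case
    proof (intro allI impI)
      fix B assume B: "finite B \<and> (\<forall>\<beta>\<in>B. \<beta> \<le> \<gamma>)"
      show "QQ (GB F B)"
      proof (cases "\<gamma> \<in> B")
        case False
        hence "\<forall>\<beta>\<in>B. \<beta> < \<gamma>" using B by (auto simp: le_less)
        then show ?thesis using IHset[OF IH] B by blast
      next
        case True
        define B0 where "B0 = B - {\<gamma>}"
        have BB: "B = insert \<gamma> B0" unfolding B0_def using True by blast
        have fB0: "finite B0" unfolding B0_def using B by simp
        have B0lt: "\<forall>\<beta>\<in>B0. \<beta> < \<gamma>" unfolding B0_def using B by (auto simp: le_less)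
        show ?thesis unfolding QQ_def BB
        proof (intro allI impI)
          fix Y assume H: "lin_subspace Y \<and> (\<forall>y\<in>Y. tailnull (GB F (insert \<gamma> B0)) y) \<and>
             (\<forall>M. \<exists>y\<in>Y. vanish M y \<and> (\<exists>g\<in>GB F (insert \<gamma> B0). 0 < val g y))"
          have lin: "lin_subspace Y" using H by blast
          have tn: "\<forall>y\<in>Y. tailnull (GB F (insert \<gamma> B0)) y" using H by blast
          have pos: "\<forall>M. \<exists>y\<in>Y. vanish M y \<and> (\<exists>g\<in>GB F (insert \<gamma> B0). 0 < val g y)" using H by blast
          consider "ord_least \<gamma>" | \<beta> where "ord_succ_of \<gamma> \<beta>" | "ord_limit \<gamma>" using tri[of \<gamma>] by blast
          then show "c0seq (GB F (insert \<gamma> B0)) Y"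
          proof cases
            case 1
            have "B0 = {}" using B0lt least_nlt[OF 1] by blast
            obtain y g where g: "g \<in> GB F (insert \<gamma> B0)" "0 < val g y" using pos by blast
            have "g = (1,{}) \<or> (\<exists>E \<beta>. g = (1,E) \<and> \<beta> \<in> insert \<gamma> B0 \<and> E \<in> F \<beta>)"
              using GB_cases[OF g(1)] .
            hence "val g y = 0" using \<open>B0 = {}\<close> tf_least[OF tf 1] by (auto simp: val0)
            then show ?thesis using g by simp
          next
            case 2
            have "\<forall>x\<in>insert \<beta> B0. x < \<gamma>" using B0lt succ_lt[OF 2] by blast
            hence Q': "QQ (GB F (insert \<beta> B0))" using IHset[OF IH] fB0 by blast
            show ?thesis by (rule succ_case[OF tf 2 Q' lin tn pos])
          next
            case 3
            have Q': "QQ (GB F (B0 \<union> A n \<gamma>))" for n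
            proof (rule IHset[OF IH])
              show "finite (B0 \<union> A n \<gamma>)" using fB0 tf_A[OF tf 3] by simp
              show "\<forall>\<beta>\<in>B0 \<union> A n \<gamma>. \<beta> < \<gamma>" using B0lt tf_A[OF tf 3] by blast
            qed
            show ?thesis by (rule limit_case[OF tf 3 Q' lin tn pos])
          qed
        qed
      qed
    qed
  qed
  show ?thesis
  proof (cases "B = {}")
    case True then show ?thesis using GB_empty_vac by simp
  next
    case False
    have "\<forall>\<beta>\<in>B. \<beta> \<le> Max B" using fB by simp
    then show ?thesis using P fB by blast
  qed
qed


lemma sum_if_lt: "0 \<le> (c::real) \<Longrightarrow> (\<Sum>j<n. if j < k then c else 0) \<le> real k * c"
proof (induction n)
  case 0 then show ?case by simp
next
  case (Suc n)
  show ?case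
  proof (cases "n < k")
    case True
    have "(\<Sum>j<n. if j < k then c else 0) \<le> real n * c"
    proof -
      have "(\<Sum>j<n. if j < k then c else 0) = (\<Sum>j<n. c)" using True by (intro sum.cong) auto
      thus ?thesis by simp
    qed
    moreover have "real n * c + c \<le> real k * c"
    proof -
      have "real (Suc n) \<le> real k" using True by simp
      hence "real (Suc n) * c \<le> real k * c" using Suc.prems by (rule mult_right_mono)
      thus ?thesis by (simp add: distrib_right)
    qed
    ultimately show ?thesis using True by (simp add: distrib_right)
  next
    case False then show ?thesis using Suc by simp
  qed
qed

lemma thresh_sum:
  fixes f :: "nat \<Rightarrow> real" and Nj :: "nat \<Rightarrow> nat" and q :: nat and c :: "nat \<Rightarrow> real"
  assumes small: "\<And>j. \<not> Nj j < q \<Longrightarrow> f j \<le> (1/2)^j"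
    and top: "\<And>j. f j \<le> 1"
    and below: "\<And>j j'. j < j' \<Longrightarrow> Nj j' < q \<Longrightarrow> f j \<le> c j' + (1/2)^(j+3)"
    and c: "\<And>j'. 0 \<le> c j' \<and> real j' * c j' \<le> 1"
  shows "(\<Sum>j<n. f j) \<le> 8"
proof (cases "\<exists>j<n. Nj j < q")
  case True
  define S where "S = {j. j < n \<and> Nj j < q}"
  have fS: "finite S" unfolding S_def by simp
  have neS: "S \<noteq> {}" unfolding S_def using True by blast
  define js where "js = Max S"
  have jsS: "js \<in> S" unfolding js_def using fS neS by (rule Max_in)
  have jsmax: "\<And>j. j \<in> S \<Longrightarrow> j \<le> js" unfolding js_def using fS by simp
  have "\<forall>j<n. f j \<le> (if j = js then 1 else 0) + (if j < js then c js else 0) + 3*(1/2)^j"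
  proof (intro allI impI)
    fix j assume jn: "j < n"
    have h0: "(0::real) \<le> (1/2)^j" by simp
    have hp: "(1/2::real)^(j+3) \<le> (1/2)^j" by (rule half_pow)
    have c0: "0 \<le> c js" using c by blast
    consider "j < js" | "j = js" | "js < j" by linarith
    then show "f j \<le> (if j = js then 1 else 0) + (if j < js then c js else 0) + 3*(1/2)^j"
    proof cases
      case 1
      have "Nj js < q" using jsS unfolding S_def by blast
      hence "f j \<le> c js + (1/2)^(j+3)" using below 1 by blast
      moreover have "(if j = js then 1 else 0::real) = 0" "(if j < js then c js else 0) = c js" using 1 by auto
      ultimately show ?thesis using h0 hp by linarith
    next
      case 2
      moreover have "(if j = js then 1 else 0::real) = 1" "(if j < js then c js else 0) = 0" using 2 by auto
      ultimately show ?thesis using top[of j] h0 by linarith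
    next
      case 3
      hence "j \<notin> S" using jsmax by fastforce
      hence "\<not> Nj j < q" unfolding S_def using jn by blast
      hence "f j \<le> (1/2)^j" by (rule small)
      moreover have "(if j = js then 1 else 0::real) = 0" "(if j < js then c js else 0) = 0" using 3 by auto
      ultimately show ?thesis using h0 by linarith
    qed
  qed
  moreover have "(\<Sum>j<n. if j < js then c js else 0) \<le> 1"
    using sum_if_lt[where c="c js" and n=n and k=js] c[of js] by linarith
  ultimately show ?thesis by (rule sum_ub)
next
  case False
  have "\<forall>j<n. f j \<le> (if j = 0 then 1 else 0) + 0 + 3*(1/2)^j"
  proof (intro allI impI)
    fix j assume "j < n"
    hence "f j \<le> (1/2)^j" using False small by blast
    moreover have "(0::real) \<le> (1/2)^j" by simp
    moreover have "(0::real) \<le> (if j = 0 then 1 else 0)" by simp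
    ultimately show "f j \<le> (if j = 0 then 1 else 0) + 0 + 3*(1/2)^j" by linarith
  qed
  then show ?thesis by (rule sum_ub[where e="\<lambda>_. 0"]) simp
qed

lemma val_split:
  assumes th: "0 \<le> \<theta>" and fE: "finite E"
  shows "val (\<theta>,E) y \<le> \<theta> * (\<Sum>t<M. \<bar>y t\<bar>) + val (\<theta>,E) (tailv M y)"
proof -
  have "(\<Sum>t\<in>E. \<bar>y t\<bar>) = (\<Sum>t\<in>E. (if t < M then \<bar>y t\<bar> else 0)) + (\<Sum>t\<in>E. \<bar>tailv M y t\<bar>)"
    unfolding sum.distrib[symmetric] tailv_def by (intro sum.cong) auto
  also have "(\<Sum>t\<in>E. (if t < M then \<bar>y t\<bar> else 0)) = (\<Sum>t\<in>{t\<in>E. t < M}. \<bar>y t\<bar>)"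
    using fE by (simp add: sum.inter_filter)
  also have "\<dots> \<le> (\<Sum>t<M. \<bar>y t\<bar>)" by (intro sum_mono2) auto
  finally have "(\<Sum>t\<in>E. \<bar>y t\<bar>) \<le> (\<Sum>t<M. \<bar>y t\<bar>) + (\<Sum>t\<in>E. \<bar>tailv M y t\<bar>)" by simp
  hence "\<theta> * (\<Sum>t\<in>E. \<bar>y t\<bar>) \<le> \<theta> * ((\<Sum>t<M. \<bar>y t\<bar>) + (\<Sum>t\<in>E. \<bar>tailv M y t\<bar>))"
    by (rule mult_left_mono[OF _ th])
  thus ?thesis unfolding val_def by (simp add: distrib_left)
qed

lemma sum_abs_bound: "(\<And>t. \<bar>y t\<bar> \<le> B) \<Longrightarrow> (\<Sum>t<M. \<bar>y t\<bar>) \<le> real M * B"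
  using sum_bounded_above[of "{..<M}" "\<lambda>t. \<bar>y t\<bar>" B] by simp


definition GT :: "('o \<Rightarrow> nat set set) \<Rightarrow> (nat \<Rightarrow> real) \<Rightarrow> (nat \<Rightarrow> 'o) \<Rightarrow> (real \<times> nat set) set" where
  "GT F \<Theta> as = {(\<Theta> n, E) | n E. E \<in> F (as n)}"

lemma GBimg_mem: "n \<le> p \<Longrightarrow> E \<in> F (as n) \<Longrightarrow> (1,E) \<in> GB F (as ` {..p})"
  by (rule GB_mem[of "as n"]) auto

lemma GBimg_cases: "g \<in> GB F (as ` {..p}) \<Longrightarrow> g = (1,{}) \<or> (\<exists>E n. g = (1,E) \<and> n \<le> p \<and> E \<in> F (as n))"
  using GB_cases[of g F "as ` {..p}"] by auto

lemma theta_QQ: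
  assumes tf: "transfinite_family A F" and th: "\<forall>n. 0 < \<Theta> n \<and> \<Theta> n \<le> 1" and dec: "decseq \<Theta>"
    and lim: "\<Theta> \<longlonglongrightarrow> 0" and a0: "\<not> ord_least (as 0)"
  shows "QQ (GT F \<Theta> as)"
  unfolding QQ_def
proof (intro allI impI)
  fix Y assume H: "lin_subspace Y \<and> (\<forall>y\<in>Y. tailnull (GT F \<Theta> as) y) \<and>
     (\<forall>M. \<exists>y\<in>Y. vanish M y \<and> (\<exists>g\<in>GT F \<Theta> as. 0 < val g y))"
  define G where "G = GT F \<Theta> as"
  have lin: "lin_subspace Y" using H by blast
  have tn: "\<forall>y\<in>Y. tailnull G y" using H G_def by blast
  have pos: "\<forall>M. \<exists>y\<in>Y. vanish M y \<and> (\<exists>g\<in>G. 0 < val g y)" using H G_def by blast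
  have wf: "wfG G" unfolding wfG_def G_def GT_def
  proof
    fix g assume "g \<in> {(\<Theta> n, E) |n E. E \<in> F (as n)}"
    then obtain n E where "g = (\<Theta> n, E)" "E \<in> F (as n)" by blast
    thus "0 \<le> fst g \<and> finite (snd g)" using th F_finite[OF tf] by (simp add: less_imp_le)
  qed
  obtain K where K: "\<And>t. K \<le> t \<Longrightarrow> {t} \<in> F (as 0)" using F_sing[OF tf a0] by blast
  define t0 where "t0 = \<Theta> 0"
  have t0: "0 < t0" "t0 \<le> 1" using th t0_def by auto
  have exN: "\<forall>k M. \<exists>N. \<forall>q. N < q \<longrightarrow> \<Theta> q \<le> t0/((real k+1)*(real M+1))"
  proof (intro allI)
    fix k M
    have "0 < t0/((real k+1)*(real M+1))" using t0 by simp
    then obtain N where N: "\<forall>n\<ge>N. norm (\<Theta> n - 0) < t0/((real k+1)*(real M+1))" using LIMSEQ_D[OF lim] by blast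
    have "\<forall>q. N < q \<longrightarrow> \<Theta> q \<le> t0/((real k+1)*(real M+1))"
    proof (intro allI impI)
      fix q assume "N < q"
      hence "norm (\<Theta> q - 0) < t0/((real k+1)*(real M+1))" using N by simp
      thus "\<Theta> q \<le> t0/((real k+1)*(real M+1))" by simp
    qed
    thus "\<exists>N. \<forall>q. N < q \<longrightarrow> \<Theta> q \<le> t0/((real k+1)*(real M+1))" by blast
  qed
  obtain Nf where Nf: "\<And>k M q. Nf k M < q \<Longrightarrow> \<Theta> q \<le> t0/((real k+1)*(real M+1))"
    using exN by metis
  define G' where "G' = (\<lambda>p. GB F (as ` {..p}))"
  show "c0seq (GT F \<Theta> as) Y" unfolding G_def[symmetric]
  proof (rule dich[where G'=G' and P=Nf and Mstart=K, OF lin tn wf])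
    show "\<forall>p. (1, {}) \<in> G' p" unfolding G'_def by (simp add: GB_z)
  next
    fix p M and C :: real assume C: "C > 0" and d1: "\<forall>y\<in>Y. vanish M y \<longrightarrow> (\<forall>r. (\<forall>g'\<in>G' p. val g' y \<le> r) \<longrightarrow> (\<forall>g\<in>G. val g y \<le> C*r))"
    have Qp: "QQ (G' p)" unfolding G'_def by (rule main_QQ[OF tf]) simp
    have tp: "0 < \<Theta> p" using th by blast
    have d2: "\<forall>y. vanish M y \<longrightarrow> (\<forall>r. (\<forall>g\<in>G. val g y \<le> r) \<longrightarrow> (\<forall>g'\<in>G' p. val g' y \<le> (1/\<Theta> p)*r))"
    proof (intro allI impI ballI)
      fix y r g' assume r: "\<forall>g\<in>G. val g y \<le> r" and g': "g' \<in> G' p"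
      have "(\<Theta> 0, {}) \<in> G" unfolding G_def GT_def using F_empty[OF tf] by blast
      hence r0: "0 \<le> r" using r by (force simp: val0)
      consider "g' = (1,{})" | E n where "g' = (1,E)" "n \<le> p" "E \<in> F (as n)"
        using GBimg_cases[OF g'[unfolded G'_def]] by blast
      then show "val g' y \<le> (1/\<Theta> p)*r"
      proof cases
        case 1 then show ?thesis using r0 tp by (simp add: val0)
      next
        case 2
        have "(\<Theta> n, E) \<in> G" unfolding G_def GT_def using 2(3) by blast
        hence "val (\<Theta> n, E) y \<le> r" using r by blast
        hence a: "\<Theta> n * val (1,E) y \<le> r" by (simp add: val_def)
        have "\<Theta> p \<le> \<Theta> n" using dec 2(2) by (simp add: decseq_def)
        hence "\<Theta> p * val (1,E) y \<le> \<Theta> n * val (1,E) y"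
          by (rule mult_right_mono) (simp add: val_nonneg)
        hence "\<Theta> p * val (1,E) y \<le> r" using a by linarith
        hence "val (1,E) y \<le> r / \<Theta> p" using tp by (simp add: pos_le_divide_eq mult.commute)
        then show ?thesis using 2(1) by simp
      qed
    qed
    have C2: "0 < 1/\<Theta> p" using tp by simp
    show "c0seq G Y" using transferA[OF Qp lin tn pos wf C d1 C2 d2] .
  next
    fix ys Mp assume Mp0: "Mp 0 = K" and sm: "strict_mono Mp" and HY: "\<forall>k. ys k \<in> Y"
      and Hv: "\<And>k. vanish (Mp k) (ys k)" and H1: "\<And>k g. g \<in> G \<Longrightarrow> val g (ys k) \<le> 1"
      and Hb: "\<forall>k. \<exists>g\<in>G. 1/2 < val g (ys k)"
      and H'': "\<And>k g. g \<in> G' (Nf k (Mp k)) \<Longrightarrow> val g (ys k) \<le> (1/2)^k"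
      and Ht: "\<And>k g. g \<in> G \<Longrightarrow> val g (tailv (Mp (Suc k)) (ys k)) \<le> (1/2)^(k+3)"
    have ybound: "\<And>j t. \<bar>ys j t\<bar> \<le> 1/t0"
    proof -
      fix j t
      show "\<bar>ys j t\<bar> \<le> 1/t0"
      proof (cases "t < K")
        case True
        have "Mp 0 \<le> Mp j" using sm by (simp add: strict_mono_less_eq)
        hence "ys j t = 0" using Hv[of j] True Mp0 unfolding vanish_def by auto
        then show ?thesis using t0 by simp
      next
        case False
        hence "(t0, {t}) \<in> G" unfolding G_def GT_def t0_def using K by fastforce
        hence "val (t0,{t}) (ys j) \<le> 1" by (rule H1)
        hence "t0 * \<bar>ys j t\<bar> \<le> 1" by (simp add: val_def)
        then show ?thesis using t0 by (simp add: pos_le_divide_eq mult.commute)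
      qed
    qed
    have up: "\<forall>g\<in>G. \<forall>n. (\<Sum>j<n. val g (ys j)) \<le> 8"
    proof (intro ballI allI)
      fix g n assume gG: "g \<in> G"
      then obtain q E where g: "g = (\<Theta> q, E)" "E \<in> F (as q)" unfolding G_def GT_def by blast
      have tq: "0 < \<Theta> q" "\<Theta> q \<le> 1" using th by auto
      have fE: "finite E" using F_finite[OF tf g(2)] .
      show "(\<Sum>j<n. val g (ys j)) \<le> 8"
      proof (rule thresh_sum[where Nj="\<lambda>j. Nf j (Mp j)" and q=q and c="\<lambda>j'. 1/(real j'+1)"])
        fix j assume "\<not> Nf j (Mp j) < q"
        hence "(1,E) \<in> G' (Nf j (Mp j))" unfolding G'_def using g(2) by (intro GBimg_mem) auto
        hence a: "val (1,E) (ys j) \<le> (1/2)^j" by (rule H'')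
        have "val g (ys j) = \<Theta> q * val (1,E) (ys j)" using g(1) by (simp add: val_def)
        also have "\<dots> \<le> 1 * val (1,E) (ys j)" using tq by (intro mult_right_mono) (auto simp: val_nonneg)
        finally show "val g (ys j) \<le> (1/2)^j" using a by simp
      next
        fix j show "val g (ys j) \<le> 1" using H1[OF gG] .
      next
        fix j j' assume jj: "j < j'" and q: "Nf j' (Mp j') < q"
        have tqb: "\<Theta> q \<le> t0/((real j'+1)*(real (Mp j')+1))" using Nf[OF q] .
        have "Mp (Suc j) \<le> Mp j'" using jj sm by (simp add: strict_mono_less_eq)
        have S: "(\<Sum>t<Mp (Suc j). \<bar>ys j t\<bar>) \<le> real (Mp j') * (1/t0)"
        proof -
          have "(\<Sum>t<Mp (Suc j). \<bar>ys j t\<bar>) \<le> real (Mp (Suc j)) * (1/t0)" using ybound by (rule sum_abs_bound)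
          also have "\<dots> \<le> real (Mp j') * (1/t0)" using \<open>Mp (Suc j) \<le> Mp j'\<close> t0 by (intro mult_right_mono) auto
          finally show ?thesis .
        qed
        have S0: "0 \<le> (\<Sum>t<Mp (Suc j). \<bar>ys j t\<bar>)" by (simp add: sum_nonneg)
        have "\<Theta> q * (\<Sum>t<Mp (Suc j). \<bar>ys j t\<bar>) \<le> (t0/((real j'+1)*(real (Mp j')+1))) * (real (Mp j') * (1/t0))"
          using tqb S S0 tq by (intro mult_mono) auto
        also have "\<dots> = real (Mp j') / ((real j'+1)*(real (Mp j')+1))" using t0 by (simp add: field_simps)
        also have "\<dots> \<le> 1/(real j'+1)"
        proof -
          have "real (Mp j') \<le> real (Mp j') + 1" by simp
          hence "real (Mp j') / (real (Mp j')+1) \<le> 1" by (simp add: divide_le_eq)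
          hence "(real (Mp j') / (real (Mp j')+1)) * (1/(real j'+1)) \<le> 1 * (1 / (real j'+1))"
            by (intro mult_right_mono) auto
          moreover have "(real (Mp j') / (real (Mp j')+1)) * (1/(real j'+1)) = real (Mp j') / ((real j'+1)*(real (Mp j')+1))"
            by (simp add: mult.commute)
          ultimately show ?thesis by (simp add: mult.commute)
        qed
        finally have h: "\<Theta> q * (\<Sum>t<Mp (Suc j). \<bar>ys j t\<bar>) \<le> 1/(real j'+1)" .
        have "val g (ys j) \<le> \<Theta> q * (\<Sum>t<Mp (Suc j). \<bar>ys j t\<bar>) + val g (tailv (Mp (Suc j)) (ys j))"
          using val_split[of "\<Theta> q" E "ys j" "Mp (Suc j)"] tq fE g(1) by simp
        also have "\<dots> \<le> 1/(real j'+1) + (1/2)^(j+3)" using h Ht[OF gG, of j] by (rule add_mono)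
        finally show "val g (ys j) \<le> 1/(real j'+1) + (1/2)^(j+3)" .
      next
        fix j' :: nat
        have "real j' * (1/(real j'+1)) \<le> 1" by (simp add: field_simps)
        thus "0 \<le> 1/(real j'+1) \<and> real j' * (1/(real j'+1)) \<le> 1" by simp
      qed
    qed
    show "c0seq G Y"
      by (rule finish[OF wf HY sm _ _ Hb _ up]) (use Hv H1 Ht in auto)
  qed
qed


definition GL :: "('o \<Rightarrow> nat set set) \<Rightarrow> (nat \<Rightarrow> real) \<Rightarrow> (nat \<Rightarrow> 'o) \<Rightarrow> (nat \<Rightarrow> nat) \<Rightarrow> (real \<times> nat set) set" where
  "GL F \<Theta> as l = {(\<Theta> n, E) | n E. E \<in> F (as n) \<and> (\<forall>i\<in>E. l n \<le> i)}"

lemma ell_QQ: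
  assumes tf: "transfinite_family A F" and th: "\<forall>n. 0 < \<Theta> n \<and> \<Theta> n \<le> 1" and dec: "decseq \<Theta>"
    and lmono: "mono l" and llim: "filterlim l at_top sequentially"
  shows "QQ (GL F \<Theta> as l)"
  unfolding QQ_def
proof (intro allI impI)
  fix Y assume H: "lin_subspace Y \<and> (\<forall>y\<in>Y. tailnull (GL F \<Theta> as l) y) \<and>
     (\<forall>M. \<exists>y\<in>Y. vanish M y \<and> (\<exists>g\<in>GL F \<Theta> as l. 0 < val g y))"
  define G where "G = GL F \<Theta> as l"
  have lin: "lin_subspace Y" using H by blast
  have tn: "\<forall>y\<in>Y. tailnull G y" using H G_def by blast
  have pos: "\<forall>M. \<exists>y\<in>Y. vanish M y \<and> (\<exists>g\<in>G. 0 < val g y)" using H G_def by blast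
  have wf: "wfG G" unfolding wfG_def G_def GL_def
  proof
    fix g assume "g \<in> {(\<Theta> n, E) |n E. E \<in> F (as n) \<and> (\<forall>i\<in>E. l n \<le> i)}"
    then obtain n E where "g = (\<Theta> n, E)" "E \<in> F (as n)" by blast
    thus "0 \<le> fst g \<and> finite (snd g)" using th F_finite[OF tf] by (simp add: less_imp_le)
  qed
  have exN: "\<forall>M. \<exists>N. \<forall>q. N < q \<longrightarrow> M \<le> l q"
  proof (intro allI)
    fix M :: nat
    have "eventually (\<lambda>x. M \<le> l x) sequentially" using llim by (simp add: filterlim_at_top)
    then obtain N where N: "\<forall>n\<ge>N. M \<le> l n" unfolding eventually_sequentially by blast
    thus "\<exists>N. \<forall>q. N < q \<longrightarrow> M \<le> l q" by (intro exI[of _ N]) auto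
  qed
  obtain N1 where N1: "\<forall>M. \<forall>q. N1 M < q \<longrightarrow> M \<le> l q" using choice[OF exN] by blast
  define Nf where "Nf = (\<lambda>(k::nat) M. N1 M)"
  have Nf: "\<And>k M q. Nf k M < q \<Longrightarrow> M \<le> l q" unfolding Nf_def using N1 by blast
  define G' where "G' = (\<lambda>p. GB F (as ` {..p}))"
  show "c0seq (GL F \<Theta> as l) Y" unfolding G_def[symmetric]
  proof (rule dich[where G'=G' and P=Nf and Mstart=0, OF lin tn wf])
    show "\<forall>p. (1, {}) \<in> G' p" unfolding G'_def by (simp add: GB_z)
  next
    fix p M and C :: real assume C: "C > 0" and d1: "\<forall>y\<in>Y. vanish M y \<longrightarrow> (\<forall>r. (\<forall>g'\<in>G' p. val g' y \<le> r) \<longrightarrow> (\<forall>g\<in>G. val g y \<le> C*r))"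
    define M0 where "M0 = max M (l p)"
    have d1': "\<forall>y\<in>Y. vanish M0 y \<longrightarrow> (\<forall>r. (\<forall>g'\<in>G' p. val g' y \<le> r) \<longrightarrow> (\<forall>g\<in>G. val g y \<le> C*r))"
      using d1 unfolding M0_def vanish_def by auto
    have Qp: "QQ (G' p)" unfolding G'_def by (rule main_QQ[OF tf]) simp
    have tp: "0 < \<Theta> p" using th by blast
    have d2: "\<forall>y. vanish M0 y \<longrightarrow> (\<forall>r. (\<forall>g\<in>G. val g y \<le> r) \<longrightarrow> (\<forall>g'\<in>G' p. val g' y \<le> (1/\<Theta> p)*r))"
    proof (intro allI impI ballI)
      fix y r g' assume v: "vanish M0 y" and r: "\<forall>g\<in>G. val g y \<le> r" and g': "g' \<in> G' p"
      have "(\<Theta> 0, {}) \<in> G" unfolding G_def GL_def using F_empty[OF tf] by blast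
      hence r0: "0 \<le> r" using r by (force simp: val0)
      consider "g' = (1,{})" | E n where "g' = (1,E)" "n \<le> p" "E \<in> F (as n)"
        using GBimg_cases[OF g'[unfolded G'_def]] by blast
      then show "val g' y \<le> (1/\<Theta> p)*r"
      proof cases
        case 1 then show ?thesis using r0 tp by (simp add: val0)
      next
        case 2
        have fE: "finite E" using F_finite[OF tf 2(3)] .
        define E' where "E' = {i\<in>E. M0 \<le> i}"
        have eq: "val (1,E) y = val (1,E') y" using val_restrict[OF fE v] E'_def by simp
        have E'F: "E' \<in> F (as n)" unfolding E'_def by (rule F_hered[OF tf 2(3)]) blast
        have "l n \<le> l p" using lmono 2(2) by (simp add: monoD)
        hence "\<forall>i\<in>E'. l n \<le> i" unfolding E'_def M0_def by auto
        hence "(\<Theta> n, E') \<in> G" unfolding G_def GL_def using E'F by blast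
        hence "val (\<Theta> n, E') y \<le> r" using r by blast
        hence a: "\<Theta> n * val (1,E') y \<le> r" by (simp add: val_def)
        have "\<Theta> p \<le> \<Theta> n" using dec 2(2) by (simp add: decseq_def)
        hence "\<Theta> p * val (1,E') y \<le> \<Theta> n * val (1,E') y"
          by (rule mult_right_mono) (simp add: val_nonneg)
        hence "\<Theta> p * val (1,E') y \<le> r" using a by linarith
        hence "val (1,E') y \<le> r / \<Theta> p" using tp by (simp add: pos_le_divide_eq mult.commute)
        then show ?thesis using 2(1) eq by simp
      qed
    qed
    have C2: "0 < 1/\<Theta> p" using tp by simp
    show "c0seq G Y" using transferA[OF Qp lin tn pos wf C d1' C2 d2] .
  next
    fix ys Mp assume Mp0: "Mp 0 = (0::nat)" and sm: "strict_mono Mp" and HY: "\<forall>k. ys k \<in> Y"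
      and Hv: "\<And>k. vanish (Mp k) (ys k)" and H1: "\<And>k g. g \<in> G \<Longrightarrow> val g (ys k) \<le> 1"
      and Hb: "\<forall>k. \<exists>g\<in>G. 1/2 < val g (ys k)"
      and H'': "\<And>k g. g \<in> G' (Nf k (Mp k)) \<Longrightarrow> val g (ys k) \<le> (1/2)^k"
      and Ht: "\<And>k g. g \<in> G \<Longrightarrow> val g (tailv (Mp (Suc k)) (ys k)) \<le> (1/2)^(k+3)"
    have up: "\<forall>g\<in>G. \<forall>n. (\<Sum>j<n. val g (ys j)) \<le> 8"
    proof (intro ballI allI)
      fix g n assume gG: "g \<in> G"
      then obtain q E where g: "g = (\<Theta> q, E)" "E \<in> F (as q)" "\<forall>i\<in>E. l q \<le> i" unfolding G_def GL_def by blast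
      have tq: "0 < \<Theta> q" "\<Theta> q \<le> 1" using th by auto
      show "(\<Sum>j<n. val g (ys j)) \<le> 8"
      proof (rule thresh_sum[where Nj="\<lambda>j. Nf j (Mp j)" and q=q and c="\<lambda>j'. 0"])
        fix j assume "\<not> Nf j (Mp j) < q"
        hence "(1,E) \<in> G' (Nf j (Mp j))" unfolding G'_def using g(2) by (intro GBimg_mem) auto
        hence a: "val (1,E) (ys j) \<le> (1/2)^j" by (rule H'')
        have "val g (ys j) = \<Theta> q * val (1,E) (ys j)" using g(1) by (simp add: val_def)
        also have "\<dots> \<le> 1 * val (1,E) (ys j)" using tq by (intro mult_right_mono) (auto simp: val_nonneg)
        finally show "val g (ys j) \<le> (1/2)^j" using a by simp
      next
        fix j show "val g (ys j) \<le> 1" using H1[OF gG] .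
      next
        fix j j' assume jj: "j < j'" and q: "Nf j' (Mp j') < q"
        have "Mp j' \<le> l q" using Nf[OF q] .
        moreover have "Mp (Suc j) \<le> Mp j'" using jj sm by (simp add: strict_mono_less_eq)
        ultimately have "\<forall>i\<in>E. Mp (Suc j) \<le> i" using g(3) by fastforce
        hence "val g (ys j) = val g (tailv (Mp (Suc j)) (ys j))"
          unfolding g(1) val_def tailv_def fst_conv snd_conv by (intro arg_cong[where f="\<lambda>x. \<Theta> q * x"] sum.cong refl) auto
        also have "\<dots> \<le> (1/2)^(j+3)" using Ht[OF gG] .
        finally show "val g (ys j) \<le> 0 + (1/2)^(j+3)" by simp
      next
        fix j' :: nat show "0 \<le> (0::real) \<and> real j' * 0 \<le> 1" by simp
      qed
    qed
    show "c0seq G Y"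
      by (rule finish[OF wf HY sm _ _ Hb _ up]) (use Hv H1 Ht in auto)
  qed
qed


definition spn :: "(nat \<Rightarrow> real) set \<Rightarrow> (nat \<Rightarrow> real) set" where
  "spn B = {(\<lambda>i. \<Sum>b\<in>B. c b * b i) | c. True}"

lemma spnI: "x = (\<lambda>i. \<Sum>b\<in>B. c b * b i) \<Longrightarrow> x \<in> spn B"
  unfolding spn_def by auto

lemma spn_zero: "(\<lambda>i. 0) \<in> spn B"
  by (rule spnI[where c="\<lambda>_. 0"]) simp

lemma spn_add: "x \<in> spn B \<Longrightarrow> y \<in> spn B \<Longrightarrow> (\<lambda>i. x i + y i) \<in> spn B"
proof -
  assume "x \<in> spn B" "y \<in> spn B"
  then obtain c d where x: "x = (\<lambda>i. \<Sum>b\<in>B. c b * b i)" and y: "y = (\<lambda>i. \<Sum>b\<in>B. d b * b i)"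
    unfolding spn_def by blast
  have "(\<lambda>i. x i + y i) = (\<lambda>i. \<Sum>b\<in>B. (c b + d b) * b i)"
    unfolding x y by (simp add: sum.distrib distrib_right)
  thus ?thesis by (rule spnI)
qed

lemma spn_scale: "x \<in> spn B \<Longrightarrow> (\<lambda>i. s * x i) \<in> spn B"
proof -
  assume "x \<in> spn B"
  then obtain c where x: "x = (\<lambda>i. \<Sum>b\<in>B. c b * b i)" unfolding spn_def by blast
  have "(\<lambda>i. s * x i) = (\<lambda>i. \<Sum>b\<in>B. (s * c b) * b i)"
    unfolding x by (simp add: sum_distrib_left mult.assoc)
  thus ?thesis by (rule spnI)
qed

lemma spn_elem: "finite B \<Longrightarrow> z \<in> B \<Longrightarrow> z \<in> spn B"
proof -
  assume f: "finite B" and z: "z \<in> B"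
  have "(\<lambda>i. \<Sum>b\<in>B. (if b = z then 1 else 0) * b i) = z"
  proof
    fix i
    have "(\<Sum>b\<in>B. (if b = z then 1 else 0) * b i) = (\<Sum>b\<in>B. if b = z then z i else 0)"
      by (intro sum.cong) auto
    also have "\<dots> = z i" using f z by (simp add: sum.delta')
    finally show "(\<Sum>b\<in>B. (if b = z then 1 else 0) * b i) = z i" .
  qed
  thus ?thesis by (intro spnI) (rule sym)
qed

lemma spn_mono: "finite B' \<Longrightarrow> B \<subseteq> B' \<Longrightarrow> spn B \<subseteq> spn B'"
proof
  fix x assume f: "finite B'" and s: "B \<subseteq> B'" and "x \<in> spn B"
  then obtain c where x: "x = (\<lambda>i. \<Sum>b\<in>B. c b * b i)" unfolding spn_def by blast
  define c' where "c' = (\<lambda>b. if b \<in> B then c b else 0)"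
  have "x = (\<lambda>i. \<Sum>b\<in>B'. c' b * b i)"
  proof
    fix i
    have "(\<Sum>b\<in>B'. c' b * b i) = (\<Sum>b\<in>B. c' b * b i)"
      using f s by (intro sum.mono_neutral_right) (auto simp: c'_def)
    also have "\<dots> = x i" unfolding x c'_def by simp
    finally show "x i = (\<Sum>b\<in>B'. c' b * b i)" by simp
  qed
  thus "x \<in> spn B'" by (rule spnI)
qed

lemma span_ind:
  assumes lin: "lin_subspace Y"
  shows "finite B0 \<Longrightarrow> (\<forall>y\<in>Y. vanish M y \<longrightarrow> y \<in> spn B0) \<Longrightarrow> \<exists>B. finite B \<and> Y \<subseteq> spn B"
proof (induction M arbitrary: B0)
  case 0
  then show ?case unfolding vanish_def by blast
next
  case (Suc M)
  show ?case
  proof (cases "\<exists>z\<in>Y. vanish M z \<and> z M \<noteq> 0")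
    case True
    then obtain z where z: "z \<in> Y" "vanish M z" "z M \<noteq> 0" by blast
    define B1 where "B1 = insert z B0"
    have fB1: "finite B1" unfolding B1_def using Suc.prems by simp
    have "\<forall>y\<in>Y. vanish M y \<longrightarrow> y \<in> spn B1"
    proof (intro ballI impI)
      fix y assume y: "y \<in> Y" "vanish M y"
      define s where "s = y M / z M"
      define y' where "y' = (\<lambda>i. y i + (- s) * z i)"
      have "y' \<in> Y" unfolding y'_def using lin y(1) z(1) by (intro lin_add lin_scale)
      moreover have "vanish (Suc M) y'"
        unfolding vanish_def y'_def s_def using y(2) z(2) z(3) unfolding vanish_def
        by (auto simp: less_Suc_eq)
      ultimately have "y' \<in> spn B0" using Suc.prems(2) by blast
      hence "y' \<in> spn B1" using spn_mono[OF fB1] unfolding B1_def by blast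
      moreover have "z \<in> spn B1" using fB1 unfolding B1_def by (intro spn_elem) auto
      hence "(\<lambda>i. s * z i) \<in> spn B1" by (rule spn_scale)
      ultimately have "(\<lambda>i. y' i + s * z i) \<in> spn B1" by (rule spn_add)
      moreover have "(\<lambda>i. y' i + s * z i) = y" unfolding y'_def by simp
      ultimately show "y \<in> spn B1" by simp
    qed
    then show ?thesis using Suc.IH fB1 by blast
  next
    case False
    have "\<forall>y\<in>Y. vanish M y \<longrightarrow> y \<in> spn B0"
    proof (intro ballI impI)
      fix y assume y: "y \<in> Y" "vanish M y"
      hence "y M = 0" using False by blast
      hence "vanish (Suc M) y" using y(2) unfolding vanish_def by (auto simp: less_Suc_eq)
      thus "y \<in> spn B0" using Suc.prems(2) y(1) by blast
    qed
    then show ?thesis using Suc.IH Suc.prems(1) by blast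
  qed
qed

lemma spn_unit:
  assumes "\<And>t. K \<le> t \<Longrightarrow> y t = 0"
  shows "y \<in> spn ((\<lambda>t i. if i = t then 1 else 0) ` {..<K})"
proof -
  define B where "B = (\<lambda>t (i::nat). if i = t then 1 else (0::real)) ` {..<K}"
  have fB: "finite B" unfolding B_def by simp
  have "\<And>K'. K' \<le> K \<Longrightarrow> (\<lambda>i. \<Sum>t<K'. y t * (if i = t then 1 else 0)) \<in> spn B"
  proof -
    fix K' show "K' \<le> K \<Longrightarrow> (\<lambda>i. \<Sum>t<K'. y t * (if i = t then 1 else 0)) \<in> spn B"
    proof (induction K')
      case 0 then show ?case using spn_zero by simp
    next
      case (Suc K')
      have "(\<lambda>i. if i = K' then 1 else (0::real)) \<in> spn B"
        using fB Suc.prems unfolding B_def by (intro spn_elem) auto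
      hence "(\<lambda>i. y K' * (if i = K' then 1 else 0)) \<in> spn B" by (rule spn_scale)
      moreover have "(\<lambda>i. \<Sum>t<K'. y t * (if i = t then 1 else 0)) \<in> spn B" using Suc by simp
      ultimately have "(\<lambda>i. (\<Sum>t<K'. y t * (if i = t then 1 else 0)) + y K' * (if i = K' then 1 else 0)) \<in> spn B"
        using spn_add by blast
      then show ?case by simp
    qed
  qed
  hence "(\<lambda>i. \<Sum>t<K. y t * (if i = t then 1 else 0)) \<in> spn B" by simp
  moreover have "(\<lambda>i. \<Sum>t<K. y t * (if i = t then 1 else 0)) = y"
  proof
    fix i
    have "(\<Sum>t<K. y t * (if i = t then 1 else 0)) = (\<Sum>t<K. if t = i then y i else 0)"
      by (intro sum.cong) auto
    also have "\<dots> = y i" using assms[of i] by (simp add: sum.delta)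
    finally show "(\<Sum>t<K. y t * (if i = t then 1 else 0)) = y i" .
  qed
  ultimately show ?thesis unfolding B_def by simp
qed


lemma val_cong: "(\<And>i. i \<in> snd g \<Longrightarrow> x i = y i) \<Longrightarrow> val g x = val g y"
  unfolding val_def by (simp cong: sum.cong)

lemma comb_stable:
  assumes v: "\<forall>k. vanish k (ys k)" and m: "i < m"
  shows "comb m x ys i = (\<Sum>k<Suc i. x k * ys k i)"
  unfolding comb_def
proof (rule sum.mono_neutral_right)
  show "finite {..<m}" by simp
  show "{..<Suc i} \<subseteq> {..<m}" using m by auto
  show "\<forall>k\<in>{..<m} - {..<Suc i}. x k * ys k i = 0" using v unfolding vanish_def by auto
qed

lemma comb_tail:
  assumes nm: "n \<le> m"
  shows "comb m x ys i - comb n x ys i = comb m (\<lambda>k. if n \<le> k then x k else 0) ys i"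
proof -
  have "comb m x ys i = (\<Sum>k<m. (if n \<le> k then x k else 0) * ys k i + (if k < n then x k * ys k i else 0))"
    unfolding comb_def by (intro sum.cong) auto
  also have "\<dots> = comb m (\<lambda>k. if n \<le> k then x k else 0) ys i + (\<Sum>k<m. if k < n then x k * ys k i else 0)"
    unfolding comb_def by (simp add: sum.distrib)
  also have "(\<Sum>k<m. if k < n then x k * ys k i else 0) = (\<Sum>k\<in>{k\<in>{..<m}. k < n}. x k * ys k i)"
    using sum.inter_filter[of "{..<m}" "\<lambda>k. x k * ys k i" "\<lambda>k. k < n"] by simp
  also have "{k\<in>{..<m}. k < n} = {..<n}" using nm by auto
  finally show ?thesis unfolding comb_def by simp
qed

lemma top:
  fixes G :: "(real \<times> nat set) set"
  assumes Q: "QQ G" and wf: "wfG G" and ne: "G \<noteq> {}"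
    and sing: "\<exists>K. \<forall>t\<ge>K. \<exists>\<theta>>0. (\<theta>,{t}) \<in> G"
  shows "hereditarily_c0 (\<lambda>x. SUP g\<in>G. ereal (val g x))"
proof -
  define N where "N = (\<lambda>x. SUP g\<in>G. ereal (val g x))"
  have f0: "\<And>g. g \<in> G \<Longrightarrow> 0 \<le> fst g" using wf unfolding wfG_def by blast
  have fin: "\<And>g. g \<in> G \<Longrightarrow> finite (snd g)" using wf unfolding wfG_def by blast
  have N_le: "\<And>x r. N x \<le> ereal r \<longleftrightarrow> (\<forall>g\<in>G. val g x \<le> r)"
    unfolding N_def by (simp add: SUP_le_iff)
  have N_lt_D: "\<And>x e g. N x < ereal e \<Longrightarrow> g \<in> G \<Longrightarrow> val g x \<le> e"
  proof -
    fix x e g assume "N x < ereal e" "g \<in> G"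
    have "ereal (val g x) \<le> N x" unfolding N_def using \<open>g \<in> G\<close> by (rule SUP_upper)
    hence "ereal (val g x) < ereal e" using \<open>N x < ereal e\<close> by (rule le_less_trans)
    thus "val g x \<le> e" by simp
  qed
  have N_lt: "\<And>x r e. (\<forall>g\<in>G. val g x \<le> r) \<Longrightarrow> r < e \<Longrightarrow> N x < ereal e"
  proof -
    fix x r e assume "\<forall>g\<in>G. val g x \<le> r" "r < e"
    hence "N x \<le> ereal r" using N_le by blast
    thus "N x < ereal e" using \<open>r < e\<close> by (simp add: le_less_trans)
  qed
  have N_fin: "\<And>x. N x < \<infinity> \<Longrightarrow> \<exists>R. (\<forall>g\<in>G. val g x \<le> R) \<and> N x = ereal R"
  proof -
    fix x assume fx: "N x < \<infinity>"
    obtain g0 where g0: "g0 \<in> G" using ne by blast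
    have "ereal (val g0 x) \<le> N x" unfolding N_def using g0 by (rule SUP_upper)
    moreover have "0 \<le> val g0 x" using f0[OF g0] by (rule val_nonneg)
    ultimately have "0 \<le> N x" by (meson ereal_less_eq(5) order_trans)
    then obtain R where R: "N x = ereal R" using fx by (cases "N x") auto
    hence "N x \<le> ereal R" by simp
    hence "\<forall>g\<in>G. val g x \<le> R" using N_le by blast
    thus "\<exists>R. (\<forall>g\<in>G. val g x \<le> R) \<and> N x = ereal R" using R by blast
  qed
  show ?thesis unfolding N_def[symmetric] hereditarily_c0_def
  proof (intro allI impI)
    fix Y assume HY: "Y \<subseteq> completion_c00 N \<and> lin_subspace Y \<and> N_closed_in N (completion_c00 N) Y \<and> \<not> fin_dim Y"
    have Ysub: "Y \<subseteq> completion_c00 N" and lin: "lin_subspace Y"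
      and clo: "N_closed_in N (completion_c00 N) Y" and nfd: "\<not> fin_dim Y" using HY by auto
    have comp_tn: "\<And>x. x \<in> completion_c00 N \<Longrightarrow> tailnull G x"
    proof -
      fix x assume x: "x \<in> completion_c00 N"
      have fx: "N x < \<infinity>" using x unfolding completion_c00_def by blast
      obtain R where R: "\<forall>g\<in>G. val g x \<le> R" using N_fin[OF fx] by blast
      have "\<forall>e>0. \<exists>M. \<forall>g\<in>G. val g (tailv M x) \<le> e"
      proof (intro allI impI)
        fix e :: real assume e: "0 < e"
        then obtain y where y: "y \<in> c00" "N (\<lambda>i. x i - y i) < ereal e"
          using x unfolding completion_c00_def by blast
        have "finite {i. y i \<noteq> 0}" using y(1) unfolding c00_def by blast
        then obtain M where M: "{i. y i \<noteq> 0} \<subseteq> {..<M}" using finite_nat_bounded by blast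
        have "\<forall>g\<in>G. val g (tailv M x) \<le> e"
        proof
          fix g assume g: "g \<in> G"
          have "val g (tailv M x) \<le> val g (\<lambda>i. x i - y i)"
          proof (rule val_mono[OF f0[OF g]])
            fix i
            show "\<bar>tailv M x i\<bar> \<le> \<bar>x i - y i\<bar>"
            proof (cases "i < M")
              case False
              hence "y i = 0" using M by auto
              thus ?thesis using False unfolding tailv_def by simp
            qed (simp add: tailv_def)
          qed
          also have "\<dots> \<le> e" using N_lt_D[OF y(2) g] .
          finally show "val g (tailv M x) \<le> e" .
        qed
        thus "\<exists>M. \<forall>g\<in>G. val g (tailv M x) \<le> e" by blast
      qed
      thus "tailnull G x" unfolding tailnull_def using R by blast
    qed
    have tn: "\<forall>y\<in>Y. tailnull G y" using Ysub comp_tn by blast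
    have pos: "\<forall>M. \<exists>y\<in>Y. vanish M y \<and> (\<exists>g\<in>G. 0 < val g y)"
    proof (rule ccontr)
      assume "\<not> (\<forall>M. \<exists>y\<in>Y. vanish M y \<and> (\<exists>g\<in>G. 0 < val g y))"
      then obtain M0 where H: "\<forall>y\<in>Y. vanish M0 y \<longrightarrow> (\<forall>g\<in>G. val g y \<le> 0)" by (auto simp: not_less)
      obtain K where K: "\<forall>t\<ge>K. \<exists>\<theta>>0. (\<theta>,{t}) \<in> G" using sing by blast
      define B0 where "B0 = (\<lambda>t (i::nat). if i = t then 1 else (0::real)) ` {..<K}"
      have "\<forall>y\<in>Y. vanish M0 y \<longrightarrow> y \<in> spn B0"
      proof (intro ballI impI)
        fix y assume y: "y \<in> Y" "vanish M0 y"
        have "\<And>t. K \<le> t \<Longrightarrow> y t = 0"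
        proof -
          fix t assume "K \<le> t"
          then obtain \<theta> where th: "0 < \<theta>" "(\<theta>,{t}) \<in> G" using K by blast
          hence "val (\<theta>,{t}) y \<le> 0" using H y by blast
          hence "\<theta> * \<bar>y t\<bar> \<le> 0" by (simp add: val_def)
          hence "\<bar>y t\<bar> \<le> 0" using th(1) by (simp add: mult_le_0_iff)
          thus "y t = 0" by simp
        qed
        thus "y \<in> spn B0" unfolding B0_def by (rule spn_unit)
      qed
      moreover have "finite B0" unfolding B0_def by simp
      ultimately obtain B where "finite B" "Y \<subseteq> spn B" using span_ind[OF lin] by blast
      hence "fin_dim Y" unfolding fin_dim_def spn_def by blast
      thus False using nfd by blast
    qed
    obtain ys a b where ab: "0 < a" "0 < b" and ysk: "\<forall>k. ys k \<in> Y \<and> vanish k (ys k)"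
      and up: "\<forall>n c m. 0 \<le> m \<longrightarrow> (\<forall>k<n. \<bar>c k\<bar> \<le> m) \<longrightarrow> (\<forall>g\<in>G. val g (comb n c ys) \<le> b*m)"
      and lo: "\<forall>n c k. k<n \<longrightarrow> (\<forall>j<n. \<bar>c j\<bar> \<le> \<bar>c k\<bar>) \<longrightarrow> (\<exists>g\<in>G. a*\<bar>c k\<bar> \<le> val g (comb n c ys))"
      using Q lin tn pos unfolding QQ_def c0seq_def by blast
    have ysY: "\<And>k. ys k \<in> Y" using ysk by blast
    have ysv: "\<forall>k. vanish k (ys k)" using ysk by blast
    have combY: "\<And>n c. comb n c ys \<in> Y" using comb_in[OF lin ysY] .
    define T where "T = (\<lambda>(x::nat \<Rightarrow> real) i. \<Sum>k<Suc i. x k * ys k i)"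
    have tailT: "\<And>x n s g. 0 \<le> s \<Longrightarrow> (\<forall>k\<ge>n. \<bar>x k\<bar> \<le> s) \<Longrightarrow> g \<in> G \<Longrightarrow>
        val g (\<lambda>i. T x i - comb n x ys i) \<le> b*s"
    proof -
      fix x :: "nat \<Rightarrow> real" and n :: nat and s :: real and g assume s: "0 \<le> s" and xs: "\<forall>k\<ge>n. \<bar>x k\<bar> \<le> s" and g: "g \<in> G"
      obtain k0 where k0: "snd g \<subseteq> {..<k0}" using finite_nat_bounded[OF fin[OF g]] by blast
      define m where "m = max n k0"
      have "val g (\<lambda>i. T x i - comb n x ys i) = val g (comb m (\<lambda>k. if n \<le> k then x k else 0) ys)"
      proof (rule val_cong)
        fix i assume "i \<in> snd g"
        hence im: "i < m" using k0 unfolding m_def by auto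
        have "T x i = comb m x ys i" unfolding T_def using comb_stable[OF ysv im] by simp
        thus "T x i - comb n x ys i = comb m (\<lambda>k. if n \<le> k then x k else 0) ys i"
          using comb_tail[of n m x ys i] unfolding m_def by simp
      qed
      also have "\<dots> \<le> b*s" using up s xs g by auto
      finally show "val g (\<lambda>i. T x i - comb n x ys i) \<le> b*s" .
    qed
    have c0facts: "\<And>x. x \<in> c0_seq \<Longrightarrow> (\<forall>k. \<bar>x k\<bar> \<le> sup_norm x) \<and> 0 \<le> sup_norm x \<and>
        (\<forall>s>0. \<exists>n. \<forall>k\<ge>n. \<bar>x k\<bar> \<le> s) \<and> (\<forall>R. (\<forall>k. \<bar>x k\<bar> \<le> R) \<longrightarrow> sup_norm x \<le> R)"
    proof -
      fix x assume "x \<in> c0_seq"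
      hence lx: "x \<longlonglongrightarrow> 0" unfolding c0_seq_def by simp
      have "Bseq x" using convergent_imp_Bseq convergentI[OF lx] by blast
      then obtain S where S: "\<forall>n. norm (x n) \<le> S" by (auto elim: BseqE)
      have bdd: "bdd_above (range (\<lambda>i. \<bar>x i\<bar>))" using S by (auto intro: bdd_aboveI)
      have a1: "\<forall>k. \<bar>x k\<bar> \<le> sup_norm x" unfolding sup_norm_def using bdd by (auto intro: cSup_upper)
      have a2: "0 \<le> sup_norm x" using a1[rule_format, of 0] by linarith
      have a3: "\<forall>s>0. \<exists>n. \<forall>k\<ge>n. \<bar>x k\<bar> \<le> s"
      proof (intro allI impI)
        fix s :: real assume "0 < s"
        then obtain n where "\<forall>k\<ge>n. norm (x k - 0) < s" using LIMSEQ_D[OF lx] by blast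
        thus "\<exists>n. \<forall>k\<ge>n. \<bar>x k\<bar> \<le> s" by (auto intro: less_imp_le)
      qed
      have a4: "\<forall>R. (\<forall>k. \<bar>x k\<bar> \<le> R) \<longrightarrow> sup_norm x \<le> R"
        unfolding sup_norm_def by (auto intro: cSup_least)
      show "(\<forall>k. \<bar>x k\<bar> \<le> sup_norm x) \<and> 0 \<le> sup_norm x \<and>
        (\<forall>s>0. \<exists>n. \<forall>k\<ge>n. \<bar>x k\<bar> \<le> s) \<and> (\<forall>R. (\<forall>k. \<bar>x k\<bar> \<le> R) \<longrightarrow> sup_norm x \<le> R)"
        using a1 a2 a3 a4 by blast
    qed
    have Tup: "\<And>x g. x \<in> c0_seq \<Longrightarrow> g \<in> G \<Longrightarrow> val g (T x) \<le> b * sup_norm x"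
    proof -
      fix x g assume x: "x \<in> c0_seq" and g: "g \<in> G"
      have "val g (\<lambda>i. T x i - comb 0 x ys i) \<le> b * sup_norm x"
        using tailT[of "sup_norm x" 0 x g] c0facts[OF x] g by blast
      thus "val g (T x) \<le> b * sup_norm x" by (simp add: comb_def)
    qed
    have Tapprox: "\<And>x e. x \<in> c0_seq \<Longrightarrow> 0 < e \<Longrightarrow> \<exists>n. \<forall>g\<in>G. val g (\<lambda>i. T x i - comb n x ys i) \<le> e"
    proof -
      fix x and e :: real assume x: "x \<in> c0_seq" and e: "0 < e"
      have "0 < e/b" using e ab by simp
      then obtain n where n: "\<forall>k\<ge>n. \<bar>x k\<bar> \<le> e/b" using c0facts[OF x] by blast
      have "\<forall>g\<in>G. val g (\<lambda>i. T x i - comb n x ys i) \<le> b*(e/b)"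
        using tailT[of "e/b" n x] n \<open>0 < e/b\<close> by auto
      thus "\<exists>n. \<forall>g\<in>G. val g (\<lambda>i. T x i - comb n x ys i) \<le> e" using ab by auto
    qed
    have Tcomp: "\<And>x. x \<in> c0_seq \<Longrightarrow> T x \<in> completion_c00 N"
    proof -
      fix x assume x: "x \<in> c0_seq"
      have "N (T x) \<le> ereal (b * sup_norm x)" unfolding N_le using Tup[OF x] by blast
      hence fin1: "N (T x) < \<infinity>" by (rule le_less_trans) simp
      have "\<forall>e>0. \<exists>z\<in>c00. N (\<lambda>i. T x i - z i) < ereal e"
      proof (intro allI impI)
        fix e :: real assume e: "0 < e"
        obtain n where n: "\<forall>g\<in>G. val g (\<lambda>i. T x i - comb n x ys i) \<le> e/4" using Tapprox[OF x, of "e/4"] e by auto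
        have "comb n x ys \<in> completion_c00 N" using combY Ysub by blast
        hence "\<forall>e>0. \<exists>y\<in>c00. N (\<lambda>i. comb n x ys i - y i) < ereal e" unfolding completion_c00_def by blast
        moreover have "0 < e/4" using e by simp
        ultimately obtain z where z: "z \<in> c00" "N (\<lambda>i. comb n x ys i - z i) < ereal (e/4)" by blast
        have "\<forall>g\<in>G. val g (\<lambda>i. T x i - z i) \<le> e/2"
        proof
          fix g assume g: "g \<in> G"
          have "val g (\<lambda>i. T x i - z i) = val g (\<lambda>i. (T x i - comb n x ys i) + (comb n x ys i - z i))" by simp
          also have "\<dots> \<le> val g (\<lambda>i. T x i - comb n x ys i) + val g (\<lambda>i. comb n x ys i - z i)"
            by (rule val_add[OF f0[OF g]])
          also have "\<dots> \<le> e/4 + e/4" using n g N_lt_D[OF z(2) g] by (meson add_mono)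
          finally show "val g (\<lambda>i. T x i - z i) \<le> e/2" by simp
        qed
        hence "N (\<lambda>i. T x i - z i) < ereal e" using e by (intro N_lt[of _ "e/2"]) auto
        thus "\<exists>z\<in>c00. N (\<lambda>i. T x i - z i) < ereal e" using z(1) by blast
      qed
      thus "T x \<in> completion_c00 N" unfolding completion_c00_def using fin1 by blast
    qed
    have TY: "\<forall>x\<in>c0_seq. T x \<in> Y"
    proof
      fix x assume x: "x \<in> c0_seq"
      have "\<forall>e>0. \<exists>y\<in>Y. N (\<lambda>i. T x i - y i) < ereal e"
      proof (intro allI impI)
        fix e :: real assume e: "0 < e"
        obtain n where n: "\<forall>g\<in>G. val g (\<lambda>i. T x i - comb n x ys i) \<le> e/2" using Tapprox[OF x, of "e/2"] e by auto
        hence "N (\<lambda>i. T x i - comb n x ys i) < ereal e" using e by (intro N_lt[of _ "e/2"]) auto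
        thus "\<exists>y\<in>Y. N (\<lambda>i. T x i - y i) < ereal e" using combY by blast
      qed
      thus "T x \<in> Y" using clo Tcomp[OF x] unfolding N_closed_in_def by blast
    qed
    have Tlin: "lin_on c0_seq T"
      unfolding lin_on_def T_def by (auto simp: sum.distrib sum_distrib_left algebra_simps)
    have Tlow: "\<And>x. x \<in> c0_seq \<Longrightarrow> ereal (a * sup_norm x) \<le> N (T x)"
    proof -
      fix x assume x: "x \<in> c0_seq"
      have "N (T x) \<le> ereal (b * sup_norm x)" unfolding N_le using Tup[OF x] by blast
      hence "N (T x) < \<infinity>" by (rule le_less_trans) simp
      then obtain R where R: "\<forall>g\<in>G. val g (T x) \<le> R" "N (T x) = ereal R" using N_fin by blast
      have "\<forall>k. \<bar>x k\<bar> \<le> R / a"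
      proof
        fix k
        have "a * \<bar>x k\<bar> \<le> R"
        proof (rule field_le_epsilon)
          fix \<epsilon> :: real assume eps: "0 < \<epsilon>"
          have "0 < \<epsilon>/b" using eps ab by simp
          then obtain n1 where n1: "\<forall>j\<ge>n1. \<bar>x j\<bar> \<le> \<epsilon>/b" using c0facts[OF x] by blast
          define n where "n = max n1 (Suc k)"
          have "\<forall>j\<ge>n. \<bar>x j\<bar> \<le> \<epsilon>/b" using n1 unfolding n_def by auto
          hence "\<forall>g\<in>G. val g (\<lambda>i. T x i - comb n x ys i) \<le> b*(\<epsilon>/b)"
            using tailT[of "\<epsilon>/b" n x] \<open>0 < \<epsilon>/b\<close> by auto
          hence n': "\<forall>g\<in>G. val g (\<lambda>i. T x i - comb n x ys i) \<le> \<epsilon>" using ab by auto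
          have kn: "k < n" unfolding n_def by simp
          define S where "S = (\<lambda>j. \<bar>x j\<bar>) ` {..<n}"
          have fS: "finite S" "S \<noteq> {}" unfolding S_def using kn by auto
          have "Max S \<in> S" using fS by (rule Max_in)
          then obtain j0 where j0: "j0 \<in> {..<n}" "Max S = \<bar>x j0\<bar>" unfolding S_def by (rule imageE)
          have jmax: "\<forall>j<n. \<bar>x j\<bar> \<le> \<bar>x j0\<bar>"
          proof (intro allI impI)
            fix j assume "j < n"
            hence "\<bar>x j\<bar> \<in> S" unfolding S_def by simp
            hence "\<bar>x j\<bar> \<le> Max S" by (rule Max_ge[OF fS(1)])
            thus "\<bar>x j\<bar> \<le> \<bar>x j0\<bar>" using j0(2) by simp
          qed
          have j0n: "j0 < n" using j0(1) by simp
          obtain g where g: "g \<in> G" "a * \<bar>x j0\<bar> \<le> val g (comb n x ys)" using lo j0n jmax by blast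
          have "val g (comb n x ys) = val g (\<lambda>i. T x i + (comb n x ys i - T x i))" by simp
          also have "\<dots> \<le> val g (T x) + val g (\<lambda>i. comb n x ys i - T x i)" by (rule val_add[OF f0[OF g(1)]])
          also have "val g (\<lambda>i. comb n x ys i - T x i) = val g (\<lambda>i. T x i - comb n x ys i)" by (rule val_minus_sym)
          finally have "a * \<bar>x j0\<bar> \<le> R + \<epsilon>" using g R(1) n' by fastforce
          moreover have "a * \<bar>x k\<bar> \<le> a * \<bar>x j0\<bar>" using jmax kn ab by (simp add: mult_left_mono)
          ultimately show "a * \<bar>x k\<bar> \<le> R + \<epsilon>" by linarith
        qed
        thus "\<bar>x k\<bar> \<le> R / a" using ab by (simp add: pos_le_divide_eq mult.commute)
      qed
      hence "sup_norm x \<le> R / a" using c0facts[OF x] by blast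
      hence "a * sup_norm x \<le> R" using ab by (simp add: pos_le_divide_eq mult.commute)
      thus "ereal (a * sup_norm x) \<le> N (T x)" using R(2) by simp
    qed
    have Tupp: "\<And>x. x \<in> c0_seq \<Longrightarrow> N (T x) \<le> ereal (b * sup_norm x)" unfolding N_le using Tup by blast
    show "contains_c0 N Y" unfolding contains_c0_def
      using TY Tlin Tlow Tupp ab by blast
  qed
qed


lemma mixed_repr:
  fixes \<Theta> :: "nat \<Rightarrow> real" and S :: "nat \<Rightarrow> nat set set"
  assumes th: "\<forall>n. 0 < \<Theta> n" and ne: "\<forall>n. S n \<noteq> {}"
  shows "(SUP n. ereal (\<Theta> n) * (SUP E\<in>S n. ereal (\<Sum>i\<in>E. \<bar>x i\<bar>))) =
         (SUP g\<in>(\<Union>n. (\<lambda>E. (\<Theta> n, E)) ` S n). ereal (val g x))"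
proof -
  have "(SUP g\<in>(\<Union>n. (\<lambda>E. (\<Theta> n, E)) ` S n). ereal (val g x)) =
        (SUP n. SUP g\<in>(\<lambda>E. (\<Theta> n, E)) ` S n. ereal (val g x))"
    by (rule SUP_UNION)
  also have "\<dots> = (SUP n. SUP E\<in>S n. ereal (\<Theta> n) * ereal (\<Sum>i\<in>E. \<bar>x i\<bar>))"
    by (simp add: image_image val_def)
  also have "\<dots> = (SUP n. ereal (\<Theta> n) * (SUP E\<in>S n. ereal (\<Sum>i\<in>E. \<bar>x i\<bar>)))"
  proof (rule SUP_cong[OF refl])
    fix n
    show "(SUP E\<in>S n. ereal (\<Theta> n) * ereal (\<Sum>i\<in>E. \<bar>x i\<bar>)) = ereal (\<Theta> n) * (SUP E\<in>S n. ereal (\<Sum>i\<in>E. \<bar>x i\<bar>))"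
      using ne th by (intro SUP_ereal_mult_left) (auto simp: sum_nonneg less_imp_le)
  qed
  finally show ?thesis by simp
qed

lemma schreier_repr:
  assumes tf: "transfinite_family A F"
  shows "schreier_norm F \<alpha> = (\<lambda>x. SUP g\<in>GB F {\<alpha>}. ereal (val g x))"
proof
  fix x
  have e: "GB F {\<alpha>} = (\<lambda>E. (1::real, E)) ` F \<alpha>" unfolding GB_def using F_empty[OF tf] by auto
  show "schreier_norm F \<alpha> x = (SUP g\<in>GB F {\<alpha>}. ereal (val g x))"
    unfolding e schreier_norm_def by (simp add: image_image val_def)
qed

lemma GT_eq: "GT F \<Theta> as = (\<Union>n. (\<lambda>E. (\<Theta> n, E)) ` F (as n))"
  unfolding GT_def by auto

lemma GL_eq: "GL F \<Theta> as l = (\<Union>n. (\<lambda>E. (\<Theta> n, E)) ` {E\<in>F (as n). \<forall>i\<in>E. l n \<le> i})"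
  unfolding GL_def by auto

lemma GT_wf: "transfinite_family A F \<Longrightarrow> \<forall>n. 0 < \<Theta> n \<Longrightarrow> wfG (GT F \<Theta> as)"
  unfolding wfG_def GT_eq using F_finite by (fastforce simp: less_imp_le)

lemma GL_wf: "transfinite_family A F \<Longrightarrow> \<forall>n. 0 < \<Theta> n \<Longrightarrow> wfG (GL F \<Theta> as l)"
  unfolding wfG_def GL_eq using F_finite by (fastforce simp: less_imp_le)


theorem lemma6p9:
  fixes A :: "nat \<Rightarrow> 'o::wellorder \<Rightarrow> 'o set" and F :: "'o \<Rightarrow> nat set set"
    and \<alpha> :: 'o and \<alpha>s :: "nat \<Rightarrow> 'o" and \<Theta> :: "nat \<Rightarrow> real" and l :: "nat \<Rightarrow> nat"
  assumes countable_ords: "\<forall>\<gamma>::'o. countable {..<\<gamma>}"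
    and fam: "transfinite_family A F"
    and alpha: "\<not> ord_least \<alpha>"
    and alphas: "strict_mono \<alpha>s" "\<not> ord_least (\<alpha>s 0)"
    and theta: "\<forall>n. 0 < \<Theta> n \<and> \<Theta> n \<le> 1" "decseq \<Theta>"
    and ell: "mono l" "l 0 = 0" "filterlim l at_top sequentially"
  shows "hereditarily_c0 (schreier_norm F \<alpha>)
       \<and> hereditarily_c0 (mixed_norm_l F \<Theta> \<alpha>s l)
       \<and> (\<Theta> \<longlonglongrightarrow> 0 \<longrightarrow> hereditarily_c0 (mixed_norm F \<Theta> \<alpha>s))"
proof (intro conjI impI)
  have thp: "\<forall>n. 0 < \<Theta> n" using theta(1) by blast
  obtain K0 where K0: "\<forall>m\<ge>K0. {m} \<in> F (\<alpha>s 0)" using F_sing[OF fam alphas(2)] by blast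
  show "hereditarily_c0 (schreier_norm F \<alpha>)"
  proof -
    obtain K where K: "\<forall>m\<ge>K. {m} \<in> F \<alpha>" using F_sing[OF fam alpha] by blast
    have sing: "\<exists>K. \<forall>t\<ge>K. \<exists>\<theta>>0. (\<theta>,{t}) \<in> GB F {\<alpha>}"
    proof (rule exI[of _ K], intro allI impI)
      fix t assume "K \<le> t"
      hence "(1,{t}) \<in> GB F {\<alpha>}" using K by (intro GB_mem) auto
      moreover have "(0::real) < 1" by simp
      ultimately show "\<exists>\<theta>>0. (\<theta>,{t}) \<in> GB F {\<alpha>}" by blast
    qed
    have ne: "GB F {\<alpha>} \<noteq> {}" using GB_z by blast
    show ?thesis unfolding schreier_repr[OF fam]
      by (rule top[OF main_QQ[OF fam] GB_wf[OF fam] ne sing]) simp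
  qed
  show "hereditarily_c0 (mixed_norm_l F \<Theta> \<alpha>s l)"
  proof -
    have ne1: "\<forall>n. {E\<in>F (\<alpha>s n). \<forall>i\<in>E. l n \<le> i} \<noteq> {}" using F_empty[OF fam] by blast
    have eq: "mixed_norm_l F \<Theta> \<alpha>s l = (\<lambda>x. SUP g\<in>GL F \<Theta> \<alpha>s l. ereal (val g x))"
      unfolding mixed_norm_l_def GL_eq using mixed_repr[OF thp ne1] by simp
    have sing: "\<exists>K. \<forall>t\<ge>K. \<exists>\<theta>>0. (\<theta>,{t}) \<in> GL F \<Theta> \<alpha>s l"
    proof (rule exI[of _ K0], intro allI impI)
      fix t assume "K0 \<le> t"
      hence "(\<Theta> 0,{t}) \<in> GL F \<Theta> \<alpha>s l" using K0 ell(2) unfolding GL_def by auto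
      thus "\<exists>\<theta>>0. (\<theta>,{t}) \<in> GL F \<Theta> \<alpha>s l" using thp by blast
    qed
    have ne: "GL F \<Theta> \<alpha>s l \<noteq> {}" using sing by blast
    show ?thesis unfolding eq
      by (rule top[OF ell_QQ[OF fam theta(1) theta(2) ell(1) ell(3)] GL_wf[OF fam thp] ne sing])
  qed
  assume lim: "\<Theta> \<longlonglongrightarrow> 0"
  show "hereditarily_c0 (mixed_norm F \<Theta> \<alpha>s)"
  proof -
    have ne1: "\<forall>n. F (\<alpha>s n) \<noteq> {}" using F_empty[OF fam] by blast
    have eq: "mixed_norm F \<Theta> \<alpha>s = (\<lambda>x. SUP g\<in>GT F \<Theta> \<alpha>s. ereal (val g x))"
      unfolding mixed_norm_def GT_eq using mixed_repr[OF thp ne1] by simp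
    have sing: "\<exists>K. \<forall>t\<ge>K. \<exists>\<theta>>0. (\<theta>,{t}) \<in> GT F \<Theta> \<alpha>s"
    proof (rule exI[of _ K0], intro allI impI)
      fix t assume "K0 \<le> t"
      hence "(\<Theta> 0,{t}) \<in> GT F \<Theta> \<alpha>s" using K0 unfolding GT_def by auto
      thus "\<exists>\<theta>>0. (\<theta>,{t}) \<in> GT F \<Theta> \<alpha>s" using thp by blast
    qed
    have ne: "GT F \<Theta> \<alpha>s \<noteq> {}" using sing by blast
    show ?thesis unfolding eq
      by (rule top[OF theta_QQ[where as=\<alpha>s, OF fam theta(1) theta(2) lim alphas(2)] GT_wf[OF fam thp] ne sing])
  qed
qed

end
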